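(* Let $E=(E,q)$ be a formed space. (1) For any $W\in\mathcal{P}^\omega(E)$, the map $G(E)_W\to\operatorname{GL}(W)_{R(E)}\times G(W^\perp/W)$ sending $f$ to its restriction to $W$ and its induced map on $W^\perp/W$ is split surjective. (2) For any $U\in\mathcal{P}^\omega(E)$ and $W\in\mathcal{P}^\omega(E,U)$, the analogous map $A(E,U)_W\to A^T(W,W\cap U^\perp)_{\mathrm{id}_{R(E)}}\times G(W^\perp/W)$ is split surjective.
   Context: Formed spaces over a field with involution $\sigma$ ($\bar c=\sigma(c)$), $\varepsilon$ ($\varepsilon\bar\varepsilon=1$), $\Lambda$ ($\{c-\varepsilon\bar c\}\le\Lambda\le\{c:c+\varepsilon\bar c=0\}$): a form on finite-dimensional $E$ is a sesquilinear map modulo those $f$ with $f(v,v)\in\Lambda$, $f(w,v)=-\varepsilon\overline{f(v,w)}$; $\omega_q(v,w)=q(v,w)+\varepsilon\overline{q(w,v)}$, $Q_q(v)=q(v,v)+\Lambda$; radical $R(E)=\{v:\omega_q(E,v)=0,Q_q(v)=0\}$; $U^\perp=\{v:\omega_q(v,U)=0\}$; isotropic means $\omega_q,Q_q$ vanish. $\mathcal{P}^\omega(E)$: isotropic $W$ with $R(E)<W<E$; $\mathcal{P}^\omega(E,U)$: those also satisfying $W+U^\perp=E$. For $W$ isotropic, $W^\perp/W$ carries the unique form making $W^\perp\to W^\perp/W$ an isometry. $G(E)$ is the group of bijective isometries, $G(E)_W$ its stabilizer of $W$; $A(E,U)$ the subgroup fixing $U$ pointwise, $A(E,U)_W$ its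 stabilizer of $W$. $\operatorname{GL}(W)_{R(E)}$ is the subgroup of $\operatorname{GL}(W)$ preserving $R(E)$; $A^T(W,W_0)=\{g\in\operatorname{GL}(W):g(w)-w\in W_0\ \forall w\}$, and the subscript $\mathrm{id}_{R(E)}$ denotes the subgroup restricting to the identity on $R(E)$. *)

theory Defs
  imports Complex_Main "HOL-Algebra.Bij"
begin

text \<open>
  Setting: a field 'k with involution sig, a unit eps with eps * sig eps = 1,
  a form parameter Lam; the vector space E is the whole type 'v with scalar
  multiplication s (a finite-dimensional 'k-vector space).  A form is
  represented by a sesquilinear map q (conjugate-linear in the first
  argument, linear in the second); everything below depends only on the
  equivalence class of q.
\<close>

definition field_involution :: "('k::field \<Rightarrow> 'k) \<Rightarrow> bool" where
  "field_involution sig \<longleftrightarrow>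
     (\<forall>a b. sig (a + b) = sig a + sig b) \<and> (\<forall>a b. sig (a * b) = sig a * sig b) \<and>
     (\<forall>a. sig (sig a) = a)"

definition form_parameter :: "('k::field \<Rightarrow> 'k) \<Rightarrow> 'k \<Rightarrow> 'k set \<Rightarrow> bool" where
  "form_parameter sig eps Lam \<longleftrightarrow>
     0 \<in> Lam \<and> (\<forall>a\<in>Lam. \<forall>b\<in>Lam. a + b \<in> Lam) \<and> (\<forall>a\<in>Lam. - a \<in> Lam) \<and>
     {c - eps * sig c | c. True} \<subseteq> Lam \<and> Lam \<subseteq> {c. c + eps * sig c = 0}"

definition sesquilinear :: "('k::field \<Rightarrow> 'v::ab_group_add \<Rightarrow> 'v) \<Rightarrow> ('k \<Rightarrow> 'k) \<Rightarrow> ('v \<Rightarrow> 'v \<Rightarrow> 'k) \<Rightarrow> bool" where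
  "sesquilinear s sig q \<longleftrightarrow>
     (\<forall>a v v' w. q (s a v + v') w = sig a * q v w + q v' w) \<and>
     (\<forall>a v w w'. q v (s a w + w') = q v w * a + q v w')"

definition formed_space ::
  "('k::field \<Rightarrow> 'v::ab_group_add \<Rightarrow> 'v) \<Rightarrow> ('k \<Rightarrow> 'k) \<Rightarrow> 'k \<Rightarrow> 'k set \<Rightarrow> ('v \<Rightarrow> 'v \<Rightarrow> 'k) \<Rightarrow> bool" where
  "formed_space s sig eps Lam q \<longleftrightarrow>
     vector_space s \<and> (\<exists>B. finite B \<and> module.span s B = UNIV) \<and>
     field_involution sig \<and> eps * sig eps = 1 \<and> form_parameter sig eps Lam \<and>
     sesquilinear s sig q"

text \<open>Two sesquilinear maps define the same form iff their difference is trivial.\<close>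
definition form_equiv :: "('k::field \<Rightarrow> 'k) \<Rightarrow> 'k \<Rightarrow> 'k set \<Rightarrow> ('v \<Rightarrow> 'v \<Rightarrow> 'k) \<Rightarrow> ('v \<Rightarrow> 'v \<Rightarrow> 'k) \<Rightarrow> bool" where
  "form_equiv sig eps Lam q q' \<longleftrightarrow>
     (\<forall>v. q v v - q' v v \<in> Lam) \<and>
     (\<forall>v w. q w v - q' w v = - eps * sig (q v w - q' v w))"

definition omega :: "('k::field \<Rightarrow> 'k) \<Rightarrow> 'k \<Rightarrow> ('v \<Rightarrow> 'v \<Rightarrow> 'k) \<Rightarrow> 'v \<Rightarrow> 'v \<Rightarrow> 'k" where
  "omega sig eps q v w = q v w + eps * sig (q w v)"

text \<open>Q_q(v) = Q_q(w) in k/Lam is expressed as q v v - q w w \<in> Lam; Q_q(v) = 0 as q v v \<in> Lam.\<close>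

definition radical :: "('k::field \<Rightarrow> 'k) \<Rightarrow> 'k \<Rightarrow> 'k set \<Rightarrow> ('v \<Rightarrow> 'v \<Rightarrow> 'k) \<Rightarrow> 'v set" where
  "radical sig eps Lam q = {v. (\<forall>u. omega sig eps q u v = 0) \<and> q v v \<in> Lam}"

definition perp :: "('k::field \<Rightarrow> 'k) \<Rightarrow> 'k \<Rightarrow> ('v \<Rightarrow> 'v \<Rightarrow> 'k) \<Rightarrow> 'v set \<Rightarrow> 'v set" where
  "perp sig eps q U = {v. \<forall>u\<in>U. omega sig eps q v u = 0}"

definition isotropic :: "('k::field \<Rightarrow> 'v::ab_group_add \<Rightarrow> 'v) \<Rightarrow> ('k \<Rightarrow> 'k) \<Rightarrow> 'k \<Rightarrow> 'k set \<Rightarrow> ('v \<Rightarrow> 'v \<Rightarrow> 'k) \<Rightarrow> 'v set \<Rightarrow> bool" where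
  "isotropic s sig eps Lam q W \<longleftrightarrow> module.subspace s W \<and>
     (\<forall>v\<in>W. \<forall>w\<in>W. omega sig eps q v w = 0) \<and> (\<forall>v\<in>W. q v v \<in> Lam)"

definition Pomega :: "('k::field \<Rightarrow> 'v::ab_group_add \<Rightarrow> 'v) \<Rightarrow> ('k \<Rightarrow> 'k) \<Rightarrow> 'k \<Rightarrow> 'k set \<Rightarrow> ('v \<Rightarrow> 'v \<Rightarrow> 'k) \<Rightarrow> 'v set set" where
  "Pomega s sig eps Lam q = {W. isotropic s sig eps Lam q W \<and>
      radical sig eps Lam q \<subset> W \<and> W \<subset> UNIV}"

definition PomegaU :: "('k::field \<Rightarrow> 'v::ab_group_add \<Rightarrow> 'v) \<Rightarrow> ('k \<Rightarrow> 'k) \<Rightarrow> 'k \<Rightarrow> 'k set \<Rightarrow> ('v \<Rightarrow> 'v \<Rightarrow> 'k) \<Rightarrow> 'v set \<Rightarrow> 'v set set" where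
  "PomegaU s sig eps Lam q U = {W \<in> Pomega s sig eps Lam q.
      \<forall>x. \<exists>w\<in>W. \<exists>u\<in>perp sig eps q U. x = w + u}"

definition is_linear_on :: "('k::field \<Rightarrow> 'v::ab_group_add \<Rightarrow> 'v) \<Rightarrow> 'v set \<Rightarrow> ('v \<Rightarrow> 'v) \<Rightarrow> bool" where
  "is_linear_on s W f \<longleftrightarrow> (\<forall>a. \<forall>x\<in>W. \<forall>y\<in>W. f (s a x + y) = s a (f x) + f y)"

definition isometry :: "('k::field \<Rightarrow> 'v::ab_group_add \<Rightarrow> 'v) \<Rightarrow> ('k \<Rightarrow> 'k) \<Rightarrow> 'k \<Rightarrow> 'k set \<Rightarrow> ('v \<Rightarrow> 'v \<Rightarrow> 'k) \<Rightarrow> ('v \<Rightarrow> 'v) \<Rightarrow> bool" where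
  "isometry s sig eps Lam q f \<longleftrightarrow> is_linear_on s UNIV f \<and>
     form_equiv sig eps Lam (\<lambda>v w. q (f v) (f w)) q"

definition GE_stab :: "('k::field \<Rightarrow> 'v::ab_group_add \<Rightarrow> 'v) \<Rightarrow> ('k \<Rightarrow> 'k) \<Rightarrow> 'k \<Rightarrow> 'k set \<Rightarrow> ('v \<Rightarrow> 'v \<Rightarrow> 'k) \<Rightarrow> 'v set \<Rightarrow> ('v \<Rightarrow> 'v) monoid" where
  "GE_stab s sig eps Lam q W = BijGroup UNIV
     \<lparr>carrier := {f \<in> Bij UNIV. isometry s sig eps Lam q f \<and> f ` W = W}\<rparr>"

definition AEU_stab :: "('k::field \<Rightarrow> 'v::ab_group_add \<Rightarrow> 'v) \<Rightarrow> ('k \<Rightarrow> 'k) \<Rightarrow> 'k \<Rightarrow> 'k set \<Rightarrow> ('v \<Rightarrow> 'v \<Rightarrow> 'k) \<Rightarrow> 'v set \<Rightarrow> 'v set \<Rightarrow> ('v \<Rightarrow> 'v) monoid" where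
  "AEU_stab s sig eps Lam q U W = BijGroup UNIV
     \<lparr>carrier := {f \<in> Bij UNIV. isometry s sig eps Lam q f \<and> (\<forall>u\<in>U. f u = u) \<and> f ` W = W}\<rparr>"

definition GL_pres :: "('k::field \<Rightarrow> 'v::ab_group_add \<Rightarrow> 'v) \<Rightarrow> 'v set \<Rightarrow> 'v set \<Rightarrow> ('v \<Rightarrow> 'v) monoid" where
  "GL_pres s W R = BijGroup W
     \<lparr>carrier := {g \<in> Bij W. is_linear_on s W g \<and> g ` R = R}\<rparr>"

definition AT_id :: "('k::field \<Rightarrow> 'v::ab_group_add \<Rightarrow> 'v) \<Rightarrow> 'v set \<Rightarrow> 'v set \<Rightarrow> 'v set \<Rightarrow> ('v \<Rightarrow> 'v) monoid" where
  "AT_id s W W0 R = BijGroup W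
     \<lparr>carrier := {g \<in> Bij W. is_linear_on s W g \<and> (\<forall>w\<in>W. g w - w \<in> W0) \<and> (\<forall>r\<in>R. g r = r)}\<rparr>"

definition coset :: "'v::ab_group_add \<Rightarrow> 'v set \<Rightarrow> 'v set" where
  "coset x W = (\<lambda>w. x + w) ` W"

definition quot :: "('k::field \<Rightarrow> 'k) \<Rightarrow> 'k \<Rightarrow> ('v::ab_group_add \<Rightarrow> 'v \<Rightarrow> 'k) \<Rightarrow> 'v set \<Rightarrow> 'v set set" where
  "quot sig eps q W = {coset x W | x. x \<in> perp sig eps q W}"

definition quot_linear :: "('k::field \<Rightarrow> 'v::ab_group_add \<Rightarrow> 'v) \<Rightarrow> ('k \<Rightarrow> 'k) \<Rightarrow> 'k \<Rightarrow> ('v \<Rightarrow> 'v \<Rightarrow> 'k) \<Rightarrow> 'v set \<Rightarrow> ('v set \<Rightarrow> 'v set) \<Rightarrow> bool" where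
  "quot_linear s sig eps q W h \<longleftrightarrow>
     (\<forall>a x y x' y'. x \<in> perp sig eps q W \<longrightarrow> y \<in> perp sig eps q W \<longrightarrow>
        x' \<in> h (coset x W) \<longrightarrow> y' \<in> h (coset y W) \<longrightarrow>
        h (coset (s a x + y) W) = coset (s a x' + y') W)"

text \<open>Isometries of W^perp/W with its induced form (the unique form for which the
  projection W^perp \<rightarrow> W^perp/W is an isometry): omega and Q of the induced form are
  computed on representatives, and an isometry is the same as a map preserving both.\<close>
definition quot_isometry :: "('k::field \<Rightarrow> 'k) \<Rightarrow> 'k \<Rightarrow> 'k set \<Rightarrow> ('v::ab_group_add \<Rightarrow> 'v \<Rightarrow> 'k) \<Rightarrow> 'v set \<Rightarrow> ('v set \<Rightarrow> 'v set) \<Rightarrow> bool" where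
  "quot_isometry sig eps Lam q W h \<longleftrightarrow>
     (\<forall>x y x' y'. x \<in> perp sig eps q W \<longrightarrow> y \<in> perp sig eps q W \<longrightarrow>
        x' \<in> h (coset x W) \<longrightarrow> y' \<in> h (coset y W) \<longrightarrow>
        omega sig eps q x' y' = omega sig eps q x y \<and> q x' x' - q x x \<in> Lam)"

definition G_quot :: "('k::field \<Rightarrow> 'v::ab_group_add \<Rightarrow> 'v) \<Rightarrow> ('k \<Rightarrow> 'k) \<Rightarrow> 'k \<Rightarrow> 'k set \<Rightarrow> ('v \<Rightarrow> 'v \<Rightarrow> 'k) \<Rightarrow> 'v set \<Rightarrow> ('v set \<Rightarrow> 'v set) monoid" where
  "G_quot s sig eps Lam q W = BijGroup (quot sig eps q W)
     \<lparr>carrier := {h \<in> Bij (quot sig eps q W).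
                    quot_linear s sig eps q W h \<and> quot_isometry sig eps Lam q W h}\<rparr>"

definition res_ind :: "('k::field \<Rightarrow> 'k) \<Rightarrow> 'k \<Rightarrow> ('v::ab_group_add \<Rightarrow> 'v \<Rightarrow> 'k) \<Rightarrow> 'v set \<Rightarrow> ('v \<Rightarrow> 'v) \<Rightarrow> ('v \<Rightarrow> 'v) \<times> ('v set \<Rightarrow> 'v set)" where
  "res_ind sig eps q W f = (restrict f W, restrict (\<lambda>C. f ` C) (quot sig eps q W))"

definition split_surjective :: "('a, 'c) monoid_scheme \<Rightarrow> ('b, 'd) monoid_scheme \<Rightarrow> ('a \<Rightarrow> 'b) \<Rightarrow> bool" where
  "split_surjective G H p \<longleftrightarrow> p \<in> hom G H \<and> (\<exists>t \<in> hom H G. \<forall>y \<in> carrier H. p (t y) = y)"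

end

theory Submission
  imports Defs
begin

locale fsp =
  fixes s :: "'k::field \<Rightarrow> 'v::ab_group_add \<Rightarrow> 'v"
    and sig :: "'k \<Rightarrow> 'k" and eps :: 'k and Lam :: "'k set"
    and q :: "'v \<Rightarrow> 'v \<Rightarrow> 'k"
  assumes fs: "formed_space s sig eps Lam q"
begin

sublocale vector_space s using fs unfolding formed_space_def by auto

abbreviation om where "om \<equiv> omega sig eps q"

lemma sig_add: "sig (a + b) = sig a + sig b"
  and sig_mult: "sig (a * b) = sig a * sig b"
  and sig_sig[simp]: "sig (sig a) = a"
  using fs unfolding formed_space_def field_involution_def by auto

lemma eps_sig: "eps * sig eps = 1"
  using fs unfolding formed_space_def by auto

lemma Lam0: "0 \<in> Lam" and Lam_add: "a \<in> Lam \<Longrightarrow> b \<in> Lam \<Longrightarrow> a + b \<in> Lam"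
  and Lam_neg: "a \<in> Lam \<Longrightarrow> - a \<in> Lam" and Lam_min: "c - eps * sig c \<in> Lam"
  using fs unfolding formed_space_def form_parameter_def by blast+

lemma Lam_diff: "a \<in> Lam \<Longrightarrow> b \<in> Lam \<Longrightarrow> a - b \<in> Lam"
  using Lam_add[of a "-b"] Lam_neg[of b] by simp

lemma sig0[simp]: "sig 0 = 0"
  using sig_add[of 0 0] by (metis add_cancel_right_right add_0)

lemma sig_neg[simp]: "sig (- a) = - sig a"
  using sig_add[of a "-a"] by (simp add: eq_neg_iff_add_eq_0 add.commute)

lemma sig_diff: "sig (a - b) = sig a - sig b"
  using sig_add[of a "-b"] by simp

lemma sig1[simp]: "sig 1 = 1"
proof -
  have "sig 1 = sig 1 * sig 1" using sig_mult[of 1 1] by simp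
  hence "sig 1 = 0 \<or> sig 1 = 1" by (metis mult_cancel_right1 mult_zero_right)
  moreover have "sig 1 \<noteq> 0" using sig_sig[of 1] sig0 by (metis one_neq_zero)
  ultimately show ?thesis by blast
qed

lemma sig_eq0[simp]: "sig a = 0 \<longleftrightarrow> a = 0"
  by (metis sig0 sig_sig)

lemma sig_sum: "sig (sum f A) = sum (\<lambda>i. sig (f i)) A"
  by (induction A rule: infinite_finite_induct) (auto simp: sig_add)

lemma eps_nz: "eps \<noteq> 0" using eps_sig by auto

lemma sesq: "q (s a v + v') w = sig a * q v w + q v' w" "q v (s a w + w') = q v w * a + q v w'"
  using fs unfolding formed_space_def sesquilinear_def by auto

lemma q0l[simp]: "q 0 w = 0"
proof -
  have "q (s 1 0 + 0) w = sig 1 * q 0 w + q 0 w" by (rule sesq)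
  hence "q 0 w = q 0 w + q 0 w" by simp
  thus ?thesis by (metis add_cancel_right_right)
qed

lemma q0r[simp]: "q v 0 = 0"
proof -
  have "q v (s 1 0 + 0) = q v 0 * 1 + q v 0" by (rule sesq)
  hence "q v 0 = q v 0 + q v 0" by simp
  thus ?thesis by (metis add_cancel_right_right)
qed

lemma q_addl: "q (v + v') w = q v w + q v' w"
  using sesq(1)[of 1 v v' w] by simp
lemma q_addr: "q v (w + w') = q v w + q v w'"
  using sesq(2)[of v 1 w w'] by simp
lemma q_scalel: "q (s a v) w = sig a * q v w"
  using sesq(1)[of a v 0 w] by simp
lemma q_scaler: "q v (s a w) = q v w * a"
  using sesq(2)[of v a w 0] by simp
lemma q_negl: "q (- v) w = - q v w"
  using q_addl[of v "-v" w] by (simp add: eq_neg_iff_add_eq_0 add.commute)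
lemma q_negr: "q v (- w) = - q v w"
  using q_addr[of v w "-w"] by (simp add: eq_neg_iff_add_eq_0 add.commute)
lemma q_diffl: "q (v - v') w = q v w - q v' w"
  using q_addl[of v "-v'" w] q_negl by simp
lemma q_diffr: "q v (w - w') = q v w - q v w'"
  using q_addr[of v w "-w'"] q_negr by simp

lemma om_def': "om v w = q v w + eps * sig (q w v)" by (simp add: omega_def)

lemma om_addl: "om (v + v') w = om v w + om v' w"
  by (simp add: omega_def q_addl q_addr sig_add algebra_simps)
lemma om_addr: "om v (w + w') = om v w + om v w'"
  by (simp add: omega_def q_addl q_addr sig_add algebra_simps)
lemma om_scalel: "om (s a v) w = sig a * om v w"
  by (simp add: omega_def q_scalel q_scaler sig_mult algebra_simps)
lemma om_scaler: "om v (s a w) = om v w * a"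
  by (simp add: omega_def q_scalel q_scaler sig_mult algebra_simps)
lemma om0l[simp]: "om 0 w = 0" by (simp add: omega_def)
lemma om0r[simp]: "om v 0 = 0" by (simp add: omega_def)
lemma om_negl: "om (- v) w = - om v w"
  by (simp add: omega_def q_negl q_negr)
lemma om_negr: "om v (- w) = - om v w"
  by (simp add: omega_def q_negl q_negr)
lemma om_diffl: "om (v - v') w = om v w - om v' w"
  by (simp add: omega_def q_diffl q_diffr sig_diff algebra_simps)
lemma om_diffr: "om v (w - w') = om v w - om v w'"
  by (simp add: omega_def q_diffl q_diffr sig_diff algebra_simps)

lemma om_sym: "om w v = eps * sig (om v w)"
proof -
  have "eps * sig (om v w) = eps * sig (q v w) + (eps * sig eps) * q w v"
    by (simp add: omega_def sig_add sig_mult algebra_simps)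
  thus ?thesis using eps_sig by (simp add: omega_def)
qed

lemma om_zero_sym: "om w v = 0 \<longleftrightarrow> om v w = 0"
  using om_sym[of w v] eps_nz by simp

lemma om_suml: "finite A \<Longrightarrow> om (sum f A) w = (\<Sum>i\<in>A. om (f i) w)"
  by (induction A rule: finite_induct) (auto simp: om_addl)
lemma om_sumr: "finite A \<Longrightarrow> om v (sum f A) = (\<Sum>i\<in>A. om v (f i))"
  by (induction A rule: finite_induct) (auto simp: om_addr)

lemma Q_add: "q (a + b) (a + b) - (q a a + q b b + om a b) \<in> Lam"
proof -
  have "q (a + b) (a + b) - (q a a + q b b + om a b) = q b a - eps * sig (q b a)"
    by (simp add: omega_def q_addl q_addr algebra_simps)
  thus ?thesis using Lam_min by simp
qed

lemma Q_neg: "q (- a) (- a) = q a a" by (simp add: q_negl q_negr)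

end

context fsp
begin

abbreviation ssum :: "'v set \<Rightarrow> 'v set \<Rightarrow> 'v set" where
  "ssum A B \<equiv> {x + y |x y. x \<in> A \<and> y \<in> B}"

lemma fin_span: "\<exists>S. finite S \<and> span S = UNIV"
  using fs unfolding formed_space_def by auto

lemma fin_basis:
  assumes "subspace X"
  shows "\<exists>B. finite B \<and> B \<subseteq> X \<and> independent B \<and> span B = X"
proof -
  obtain B where B: "B \<subseteq> X" "independent B" "X \<subseteq> span B" by (metis basis_exists)
  obtain S where S: "finite S" "span S = UNIV" using fin_span by blast
  have "finite B" using independent_span_bound[OF S(1) B(2)] S(2) by auto
  moreover have "span B = X" using B assms by (metis span_subspace)
  ultimately show ?thesis using B by blast
qed

lemma gc_aux:
  assumes "finite S" "subspace A" "subspace B" "A \<inter> B = {0}"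
  shows "\<exists>X. subspace X \<and> A \<subseteq> X \<and> X \<inter> B = {0} \<and> S \<subseteq> ssum X B \<and> X \<subseteq> span (A \<union> S)"
  using assms(1)
proof (induction S rule: finite_induct)
  case empty
  have "A \<subseteq> span (A \<union> {})" using span_superset by auto
  then show ?case using assms by (intro exI[of _ A]) auto
next
  case (insert v S)
  then obtain X where X: "subspace X" "A \<subseteq> X" "X \<inter> B = {0}" "S \<subseteq> ssum X B" "X \<subseteq> span (A \<union> S)"
    by blast
  have sp: "span (A \<union> S) \<subseteq> span (A \<union> insert v S)" by (rule span_mono) auto
  show ?case
  proof (cases "v \<in> ssum X B")
    case True
    then show ?thesis using X sp by (intro exI[of _ X]) auto
  next
    case False
    let ?X = "span (insert v X)"
    have spX: "span X = X" using X(1) by simp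
    have "?X \<inter> B = {0}"
    proof (intro equalityI subsetI)
      fix y assume y: "y \<in> ?X \<inter> B"
      then obtain k where k: "y - s k v \<in> X" unfolding span_insert spX by blast
      show "y \<in> {0}"
      proof (cases "k = 0")
        case True
        then show ?thesis using k y X(3) by auto
      next
        case False
        have "v = s (- inverse k) (y - s k v) + s (inverse k) y"
          using False by (simp add: algebra_simps)
        moreover have "s (- inverse k) (y - s k v) \<in> X" using k X(1) subspace_scale by blast
        moreover have "s (inverse k) y \<in> B" using y assms(3) subspace_scale by blast
        ultimately have "v \<in> ssum X B" by blast
        then show ?thesis using \<open>v \<notin> ssum X B\<close> by blast
      qed
    next
      fix y :: 'v assume "y \<in> {0}" thus "y \<in> ?X \<inter> B" using assms(3) span_zero subspace_0 by auto
    qed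
    moreover have "insert v S \<subseteq> ssum ?X B"
    proof -
      have "v \<in> ssum ?X B" using span_base[of v "insert v X"] subspace_0[OF assms(3)]
        by (metis (mono_tags, lifting) add.right_neutral insertI1 mem_Collect_eq)
      moreover have "ssum X B \<subseteq> ssum ?X B"
      proof
        fix y assume "y \<in> ssum X B"
        then obtain x b where "y = x + b" "x \<in> X" "b \<in> B" by blast
        moreover have "x \<in> ?X" using \<open>x \<in> X\<close> span_superset by blast
        ultimately show "y \<in> ssum ?X B" by blast
      qed
      ultimately show ?thesis using X(4) by (simp add: subset_iff)
    qed
    moreover have "?X \<subseteq> span (A \<union> insert v S)"
      using X(5) sp by (intro span_minimal) (auto intro: span_base)
    moreover have "A \<subseteq> ?X" using X(2) span_superset by blast
    ultimately show ?thesis by (intro exI[of _ ?X]) auto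
  qed
qed

lemma gc_full:
  assumes "subspace A" "subspace B" "A \<inter> B = {0}"
  shows "\<exists>X. subspace X \<and> A \<subseteq> X \<and> X \<inter> B = {0} \<and> (\<forall>v. \<exists>x\<in>X. \<exists>b\<in>B. v = x + b)"
proof -
  obtain S where S: "finite S" "span S = UNIV" using fin_span by blast
  obtain X where X: "subspace X" "A \<subseteq> X" "X \<inter> B = {0}" "S \<subseteq> ssum X B"
    using gc_aux[OF S(1) assms] by blast
  have "subspace (ssum X B)" using subspace_sums X(1) assms(2) by blast
  hence "span S \<subseteq> ssum X B" using X(4) span_minimal by blast
  thus ?thesis using X S(2) by (intro exI[of _ X]) blast
qed

lemma gc_rel:
  assumes "subspace A" "subspace D"
  shows "\<exists>C. subspace C \<and> C \<subseteq> D \<and> C \<inter> A = {0} \<and> (\<forall>v\<in>D. \<exists>a\<in>A. \<exists>c\<in>C. v = a + c)"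
proof -
  obtain S where S: "finite S" "S \<subseteq> D" "span S = D" using fin_basis[OF assms(2)] by blast
  obtain X where X: "subspace X" "X \<inter> A = {0}" "S \<subseteq> ssum X A" "X \<subseteq> span ({0} \<union> S)"
    using gc_aux[OF S(1) subspace_single_0 assms(1)] subspace_0[OF assms(1)] by auto
  have "subspace (ssum X A)" using subspace_sums X(1) assms(1) by blast
  hence "D \<subseteq> ssum X A" using X(3) span_minimal S(3) by blast
  moreover have "X \<subseteq> D"
  proof -
    have "span ({0} \<union> S) \<subseteq> D" using S assms(2) span_minimal by (simp add: subspace_0)
    thus ?thesis using X(4) by blast
  qed
  moreover have "\<forall>v\<in>D. \<exists>a\<in>A. \<exists>c\<in>X. v = a + c"
  proof
    fix v assume "v \<in> D"
    then obtain x a where "v = x + a" "x \<in> X" "a \<in> A" using \<open>D \<subseteq> ssum X A\<close> by blast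
    thus "\<exists>a\<in>A. \<exists>c\<in>X. v = a + c" by (metis add.commute)
  qed
  ultimately show ?thesis using X by (intro exI[of _ X]) auto
qed

definition proj :: "'v set \<Rightarrow> 'v set \<Rightarrow> 'v \<Rightarrow> 'v" where
  "proj A B v = (THE a. a \<in> A \<and> v - a \<in> B)"

lemma proj_unique:
  assumes "subspace A" "subspace B" "A \<inter> B = {0}" "a \<in> A" "v - a \<in> B"
  shows "proj A B v = a"
  unfolding proj_def
proof (rule the_equality)
  show "a \<in> A \<and> v - a \<in> B" using assms by blast
  fix a' assume a': "a' \<in> A \<and> v - a' \<in> B"
  have "a' - a \<in> A" using a' assms subspace_diff by blast
  moreover have "a' - a \<in> B" using subspace_diff[OF assms(2) assms(5), of "v - a'"] a'
    by (simp add: algebra_simps)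
  ultimately show "a' = a" using assms(3) by (metis IntI singletonD eq_iff_diff_eq_0)
qed

lemma proj_props:
  assumes "subspace A" "subspace B" "A \<inter> B = {0}" "v = a + b" "a \<in> A" "b \<in> B"
  shows "proj A B v = a" "v - proj A B v = b"
  using proj_unique[OF assms(1-3,5)] assms(4,6) by auto

lemma proj_in:
  assumes "subspace A" "subspace B" "A \<inter> B = {0}" "v \<in> ssum A B"
  shows "proj A B v \<in> A" "v - proj A B v \<in> B"
proof -
  obtain a b where ab: "v = a + b" "a \<in> A" "b \<in> B" using assms(4) by blast
  show "proj A B v \<in> A" "v - proj A B v \<in> B" using proj_props[OF assms(1-3) ab] ab by auto
qed

lemma proj_lin:
  assumes "subspace A" "subspace B" "A \<inter> B = {0}" "v \<in> ssum A B" "w \<in> ssum A B"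
  shows "proj A B (s c v + w) = s c (proj A B v) + proj A B w"
proof (rule proj_unique[OF assms(1-3)])
  show "s c (proj A B v) + proj A B w \<in> A"
    using proj_in[OF assms(1-4)] proj_in[OF assms(1-3,5)] assms(1) subspace_add subspace_scale by blast
  have "s c v + w - (s c (proj A B v) + proj A B w) = s c (v - proj A B v) + (w - proj A B w)"
    by (simp add: algebra_simps)
  thus "s c v + w - (s c (proj A B v) + proj A B w) \<in> B"
    using proj_in[OF assms(1-4)] proj_in[OF assms(1-3,5)] assms(2) subspace_add subspace_scale by metis
qed

lemma lin_sum:
  assumes "is_linear_on s X f" "subspace X" "finite I" "\<And>i. i \<in> I \<Longrightarrow> v i \<in> X"
  shows "f (\<Sum>i\<in>I. s (c i) (v i)) = (\<Sum>i\<in>I. s (c i) (f (v i)))"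
  using assms(3,4)
proof (induction I rule: finite_induct)
  case empty
  have "f (s 1 0 + 0) = s 1 (f 0) + f 0" using assms(1,2) subspace_0 unfolding is_linear_on_def by blast
  hence "f 0 = f 0 + f 0" by simp
  then show ?case by (metis add_cancel_right_right sum.empty)
next
  case (insert i I)
  have "(\<Sum>i\<in>I. s (c i) (v i)) \<in> X" using insert.prems by (auto intro!: subspace_sum[OF assms(2)] subspace_scale[OF assms(2)])
  then show ?case using insert assms(1) unfolding is_linear_on_def by simp
qed

lemma lin_0: "is_linear_on s X f \<Longrightarrow> subspace X \<Longrightarrow> f 0 = 0"
  using lin_sum[of X f "{}"] by simp

lemma lin_add: "is_linear_on s X f \<Longrightarrow> x \<in> X \<Longrightarrow> y \<in> X \<Longrightarrow> f (x + y) = f x + f y"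
  unfolding is_linear_on_def by (metis scale_one)

lemma lin_scale: "is_linear_on s X f \<Longrightarrow> subspace X \<Longrightarrow> x \<in> X \<Longrightarrow> f (s a x) = s a (f x)"
  unfolding is_linear_on_def by (metis add.right_neutral lin_0 is_linear_on_def subspace_0)

lemma lin_neg: "is_linear_on s X f \<Longrightarrow> subspace X \<Longrightarrow> x \<in> X \<Longrightarrow> f (- x) = - f x"
  using lin_scale[of X f x "-1"] by simp

lemma lin_diff: "is_linear_on s X f \<Longrightarrow> subspace X \<Longrightarrow> x \<in> X \<Longrightarrow> y \<in> X \<Longrightarrow> f (x - y) = f x - f y"
  using lin_add[of X f x "- y"] lin_neg[of X f y] subspace_neg by fastforce

definition conjlin_on :: "'v set \<Rightarrow> ('v \<Rightarrow> 'k) \<Rightarrow> bool" where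
  "conjlin_on X f \<longleftrightarrow> (\<forall>a. \<forall>x\<in>X. \<forall>y\<in>X. f (s a x + y) = sig a * f x + f y)"

definition klin_on :: "'v set \<Rightarrow> ('v \<Rightarrow> 'k) \<Rightarrow> bool" where
  "klin_on X f \<longleftrightarrow> (\<forall>a. \<forall>x\<in>X. \<forall>y\<in>X. f (s a x + y) = a * f x + f y)"

lemma conjlin_sum:
  assumes "conjlin_on X f" "subspace X" "finite I" "\<And>i. i \<in> I \<Longrightarrow> v i \<in> X"
  shows "f (\<Sum>i\<in>I. s (c i) (v i)) = (\<Sum>i\<in>I. sig (c i) * f (v i))"
  using assms(3,4)
proof (induction I rule: finite_induct)
  case empty
  have "f (s 1 0 + 0) = sig 1 * (f 0) + f 0" using assms(1,2) subspace_0 unfolding conjlin_on_def by blast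
  hence "f 0 = f 0 + f 0" by simp
  then show ?case by (metis add_cancel_right_right sum.empty)
next
  case (insert i I)
  have "(\<Sum>i\<in>I. s (c i) (v i)) \<in> X" using insert.prems by (auto intro!: subspace_sum[OF assms(2)] subspace_scale[OF assms(2)])
  then show ?case using insert assms(1) unfolding conjlin_on_def by simp
qed

lemma klin_sum:
  assumes "klin_on X f" "subspace X" "finite I" "\<And>i. i \<in> I \<Longrightarrow> v i \<in> X"
  shows "f (\<Sum>i\<in>I. s (c i) (v i)) = (\<Sum>i\<in>I. c i * f (v i))"
  using assms(3,4)
proof (induction I rule: finite_induct)
  case empty
  have "f (s 1 0 + 0) = 1 * (f 0) + f 0" using assms(1,2) subspace_0 unfolding klin_on_def by blast
  hence "f 0 = f 0 + f 0" by simp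
  then show ?case by (metis add_cancel_right_right sum.empty)
next
  case (insert i I)
  have "(\<Sum>i\<in>I. s (c i) (v i)) \<in> X" using insert.prems by (auto intro!: subspace_sum[OF assms(2)] subspace_scale[OF assms(2)])
  then show ?case using insert assms(1) unfolding klin_on_def by simp
qed

lemma om_conjlin: "conjlin_on X (\<lambda>x. om x w)"
  unfolding conjlin_on_def by (simp add: om_addl om_scalel)
lemma om_klin: "klin_on X (\<lambda>x. om v x)"
  unfolding klin_on_def by (simp add: om_addr om_scaler mult.commute)

end

context fsp
begin

lemma dual_family:
  assumes "finite B" "independent B" "subspace W"
    "\<And>x. x \<in> span B \<Longrightarrow> (\<forall>w\<in>W. om x w = 0) \<Longrightarrow> x = 0"
  shows "\<exists>wf. (\<forall>b\<in>B. wf b \<in> W) \<and> (\<forall>b\<in>B. \<forall>b'\<in>B. om b (wf b') = (if b = b' then 1 else 0))"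
  using assms(1,2,4)
proof (induction B rule: finite_induct)
  case empty
  then show ?case by auto
next
  case (insert b B0)
  have indB0: "independent B0" and bn: "b \<notin> span B0"
    using insert.prems(1) insert.hyps(2) by (auto simp: independent_insert)
  have nd0: "\<And>x. x \<in> span B0 \<Longrightarrow> (\<forall>w\<in>W. om x w = 0) \<Longrightarrow> x = 0"
    using insert.prems(2) span_mono[of B0 "insert b B0"] by blast
  obtain wf0 where wf0: "\<forall>i\<in>B0. wf0 i \<in> W" "\<forall>i\<in>B0. \<forall>i'\<in>B0. om i (wf0 i') = (if i = i' then 1 else 0)"
    using insert.IH[OF indB0 nd0] by blast
  define xs where "xs = b - (\<Sum>i\<in>B0. s (sig (om b (wf0 i))) i)"
  have sB0: "(\<Sum>i\<in>B0. s (sig (om b (wf0 i))) i) \<in> span B0"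
    by (intro span_sum span_scale span_base)
  have "xs \<in> span (insert b B0)"
    unfolding xs_def using sB0 span_mono[of B0 "insert b B0"]
    by (intro span_diff) (auto intro: span_base)
  moreover have "xs \<noteq> 0"
  proof
    assume "xs = 0"
    hence "b = (\<Sum>i\<in>B0. s (sig (om b (wf0 i))) i)" unfolding xs_def by simp
    thus False using bn sB0 by simp
  qed
  ultimately obtain w where w: "w \<in> W" "om xs w \<noteq> 0" using insert.prems(2) by blast
  define w' where "w' = w - (\<Sum>i\<in>B0. s (om i w) (wf0 i))"
  have w'W: "w' \<in> W" unfolding w'_def using wf0(1) w(1) assms(3)
    by (intro subspace_diff[OF assms(3)] subspace_sum[OF assms(3)] subspace_scale[OF assms(3)]) auto
  have omw'0: "om i' w' = 0" if "i' \<in> B0" for i'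
  proof -
    have "om i' w' = om i' w - (\<Sum>i\<in>B0. om i' (wf0 i) * om i w)"
      unfolding w'_def using insert.hyps(1) by (simp add: om_diffr om_sumr om_scaler)
    also have "(\<Sum>i\<in>B0. om i' (wf0 i) * om i w) = (\<Sum>i\<in>B0. if i' = i then om i w else 0)"
      using wf0(2) that by (intro sum.cong) auto
    also have "\<dots> = om i' w" using that insert.hyps(1) by simp
    finally show ?thesis by simp
  qed
  define d where "d = om xs w"
  have omb: "om b w' = d"
    unfolding d_def xs_def w'_def using insert.hyps(1)
    by (simp add: om_diffr om_sumr om_scaler om_diffl om_suml om_scalel)
  have dnz: "d \<noteq> 0" using w(2) d_def by simp
  define wn where "wn = s (inverse d) w'"
  have wnW: "wn \<in> W" unfolding wn_def using w'W subspace_scale[OF assms(3)] by blast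
  have ombn: "om b wn = 1" unfolding wn_def using omb dnz by (simp add: om_scaler)
  have omin: "om i wn = 0" if "i \<in> B0" for i unfolding wn_def using omw'0[OF that] by (simp add: om_scaler)
  define wf where "wf = (\<lambda>j. if j = b then wn else wf0 j - s (om b (wf0 j)) wn)"
  have "\<forall>j\<in>insert b B0. wf j \<in> W"
    unfolding wf_def using wnW wf0(1)
    by (auto intro!: subspace_diff[OF assms(3)] subspace_scale[OF assms(3)])
  moreover have "\<forall>j\<in>insert b B0. \<forall>j'\<in>insert b B0. om j (wf j') = (if j = j' then 1 else 0)"
  proof (intro ballI)
    fix j j' assume j: "j \<in> insert b B0" and j': "j' \<in> insert b B0"
    show "om j (wf j') = (if j = j' then 1 else 0)"
    proof (cases "j' = b")
      case True
      then show ?thesis using j ombn omin insert.hyps(2) unfolding wf_def by auto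
    next
      case False
      hence j'B: "j' \<in> B0" using j' by auto
      have "om j (wf j') = om j (wf0 j') - om j wn * om b (wf0 j')"
        unfolding wf_def using False by (simp add: om_diffr om_scaler)
      then show ?thesis using j j'B ombn omin wf0(2) insert.hyps(2) False by auto
    qed
  qed
  ultimately show ?case by blast
qed

end

context fsp
begin

abbreviation "R \<equiv> radical sig eps Lam q"
abbreviation "pp \<equiv> perp sig eps q"

lemma klin_add: "klin_on X f \<Longrightarrow> x \<in> X \<Longrightarrow> y \<in> X \<Longrightarrow> f (x + y) = f x + f y"
  unfolding klin_on_def by (metis scale_one mult_1)
lemma conjlin_add: "conjlin_on X f \<Longrightarrow> x \<in> X \<Longrightarrow> y \<in> X \<Longrightarrow> f (x + y) = f x + f y"
  unfolding conjlin_on_def by (metis scale_one mult_1 sig1)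

lemma perp_sub: "subspace (pp A)"
  unfolding perp_def by (intro subspaceI) (auto simp: om_addl om_scalel)

lemma radE: "v \<in> R \<Longrightarrow> om u v = 0" "v \<in> R \<Longrightarrow> q v v \<in> Lam"
  unfolding radical_def by auto

lemma radI: "(\<And>u. om u v = 0) \<Longrightarrow> q v v \<in> Lam \<Longrightarrow> v \<in> R"
  unfolding radical_def by auto

end

locale wctx = fsp +
  fixes W U1
  assumes WP: "W \<in> Pomega s sig eps Lam q"
    and U1: "isotropic s sig eps Lam q U1" "U1 \<inter> perp sig eps q W = {0}"
begin

abbreviation "Wp \<equiv> pp W"

lemma subW: "subspace W" and isoW: "\<And>v w. v \<in> W \<Longrightarrow> w \<in> W \<Longrightarrow> om v w = 0"
  and QW: "\<And>v. v \<in> W \<Longrightarrow> q v v \<in> Lam" and RW: "R \<subseteq> W"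
  using WP unfolding Pomega_def isotropic_def by auto

lemma subU1: "subspace U1" and isoU1: "\<And>v w. v \<in> U1 \<Longrightarrow> w \<in> U1 \<Longrightarrow> om v w = 0"
  and QU1: "\<And>v. v \<in> U1 \<Longrightarrow> q v v \<in> Lam" and U1Wp: "U1 \<inter> Wp = {0}"
  using U1 unfolding isotropic_def by auto

lemma subWp: "subspace Wp" by (rule perp_sub)

lemma W_Wp: "W \<subseteq> Wp" unfolding perp_def using isoW by auto

lemma WpW: "d \<in> Wp \<Longrightarrow> w \<in> W \<Longrightarrow> om d w = 0" unfolding perp_def by auto
lemma WWp: "d \<in> Wp \<Longrightarrow> w \<in> W \<Longrightarrow> om w d = 0" using WpW om_zero_sym by blast

lemma R_char: "R = W \<inter> {v. \<forall>u. om u v = 0}"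
  using RW QW unfolding radical_def by auto

lemma subR: "subspace R"
proof -
  have "subspace {v. \<forall>u. om u v = 0}" by (intro subspaceI) (auto simp: om_addr om_scaler)
  thus ?thesis using R_char subspace_inter subW by auto
qed

end

locale cons = wctx +
  fixes X0 X2 B wf
  assumes X0: "subspace X0" "U1 \<subseteq> X0" "X0 \<inter> Wp = {0}" "\<And>v. \<exists>x\<in>X0. \<exists>d\<in>Wp. v = x + d"
    and X2: "subspace X2" "X2 \<subseteq> X0" "X2 \<inter> U1 = {0}" "\<And>v. v \<in> X0 \<Longrightarrow> \<exists>a\<in>U1. \<exists>c\<in>X2. v = a + c"
    and B: "finite B" "independent B" "span B = X0"
    and wf: "\<And>b. b \<in> B \<Longrightarrow> wf b \<in> W" "\<And>b b'. b \<in> B \<Longrightarrow> b' \<in> B \<Longrightarrow> om b (wf b') = (if b = b' then 1 else 0)"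
begin

lemma BX0: "B \<subseteq> X0" using B span_superset by blast

lemma X0_repr: "x \<in> X0 \<Longrightarrow> \<exists>c. x = (\<Sum>b\<in>B. s (c b) b)"
  using B span_finite[OF B(1)] by auto

lemma rep1:
  assumes "conjlin_on X0 \<phi>"
  shows "\<forall>x\<in>X0. om x (\<Sum>b\<in>B. s (\<phi> b) (wf b)) = \<phi> x"
proof
  fix x assume "x \<in> X0"
  then obtain c where c: "x = (\<Sum>b\<in>B. s (c b) b)" using X0_repr by blast
  have ob: "om b (\<Sum>b\<in>B. s (\<phi> b) (wf b)) = \<phi> b" if "b \<in> B" for b
  proof -
    have "om b (\<Sum>b\<in>B. s (\<phi> b) (wf b)) = (\<Sum>b'\<in>B. om b (wf b') * \<phi> b')"
      using B(1) by (simp add: om_sumr om_scaler)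
    also have "\<dots> = (\<Sum>b'\<in>B. if b = b' then \<phi> b' else 0)" using wf(2) that by (intro sum.cong) auto
    finally show ?thesis using B(1) that by simp
  qed
  have "om x (\<Sum>b\<in>B. s (\<phi> b) (wf b)) = (\<Sum>b\<in>B. sig (c b) * om b (\<Sum>b\<in>B. s (\<phi> b) (wf b)))"
    unfolding c using B(1) by (simp add: om_suml om_scalel)
  also have "\<dots> = (\<Sum>b\<in>B. sig (c b) * \<phi> b)" using ob by simp
  also have "\<dots> = \<phi> x" unfolding c using conjlin_sum[OF assms X0(1) B(1), of "\<lambda>b. b" c] BX0 by (metis subsetD)
  finally show "om x (\<Sum>b\<in>B. s (\<phi> b) (wf b)) = \<phi> x" .
qed

lemma rep2:
  assumes "klin_on W \<psi>" "\<And>r. r \<in> R \<Longrightarrow> \<psi> r = 0"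
  shows "\<forall>w\<in>W. om (\<Sum>b\<in>B. s (sig (\<psi> (wf b))) b) w = \<psi> w"
proof
  fix w assume wW: "w \<in> W"
  define r where "r = w - (\<Sum>b\<in>B. s (om b w) (wf b))"
  have sW: "(\<Sum>b\<in>B. s (om b w) (wf b)) \<in> W"
    using wf(1) by (intro subspace_sum[OF subW] subspace_scale[OF subW]) auto
  have rW: "r \<in> W" unfolding r_def using wW sW subspace_diff[OF subW] by blast
  have orb: "om b' r = 0" if "b' \<in> B" for b'
  proof -
    have "om b' r = om b' w - (\<Sum>b\<in>B. om b' (wf b) * om b w)"
      unfolding r_def using B(1) by (simp add: om_diffr om_sumr om_scaler)
    also have "(\<Sum>b\<in>B. om b' (wf b) * om b w) = (\<Sum>b\<in>B. if b' = b then om b w else 0)"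
      using wf(2) that by (intro sum.cong) auto
    finally show ?thesis using B(1) that by simp
  qed
  have "om u r = 0" for u
  proof -
    obtain x d where xd: "x \<in> X0" "d \<in> Wp" "u = x + d" using X0(4) by blast
    obtain c where c: "x = (\<Sum>b\<in>B. s (c b) b)" using X0_repr[OF xd(1)] by blast
    have "om x r = (\<Sum>b\<in>B. sig (c b) * om b r)" unfolding c using B(1) by (simp add: om_suml om_scalel)
    also have "\<dots> = 0" using orb by simp
    finally show ?thesis using xd WpW[OF xd(2) rW] by (simp add: om_addl)
  qed
  hence rR: "r \<in> R" using QW[OF rW] by (intro radI)
  have "w = r + (\<Sum>b\<in>B. s (om b w) (wf b))" unfolding r_def by simp
  hence "\<psi> w = \<psi> r + \<psi> (\<Sum>b\<in>B. s (om b w) (wf b))"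
    using klin_add[OF assms(1) rW sW] by simp
  also have "\<dots> = (\<Sum>b\<in>B. om b w * \<psi> (wf b))"
    using assms(2)[OF rR] klin_sum[OF assms(1) subW B(1)] wf(1) by simp
  finally have pw: "\<psi> w = (\<Sum>b\<in>B. om b w * \<psi> (wf b))" .
  have "om (\<Sum>b\<in>B. s (sig (\<psi> (wf b))) b) w = (\<Sum>b\<in>B. \<psi> (wf b) * om b w)"
    using B(1) by (simp add: om_suml om_scalel)
  thus "om (\<Sum>b\<in>B. s (sig (\<psi> (wf b))) b) w = \<psi> w" using pw by (simp add: mult.commute)
qed


definition "P1 = proj U1 X2"
definition "beta y x = om (P1 y) x + q (y - P1 y) (x - P1 x)"
definition "T x = (\<Sum>b\<in>B. s (beta b x) (wf b))"
definition "Y = (\<lambda>x. x - T x) ` X0"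

lemma U1X2: "U1 \<inter> X2 = {0}" using X2(3) by blast

lemma X0_ssum: "x \<in> X0 \<Longrightarrow> x \<in> ssum U1 X2" using X2(4) by blast

lemma P1_in: "x \<in> X0 \<Longrightarrow> P1 x \<in> U1" "x \<in> X0 \<Longrightarrow> x - P1 x \<in> X2"
  unfolding P1_def using proj_in[OF subU1 X2(1) U1X2 X0_ssum] by auto

lemma P1_lin: "x \<in> X0 \<Longrightarrow> y \<in> X0 \<Longrightarrow> P1 (s a x + y) = s a (P1 x) + P1 y"
  unfolding P1_def using proj_lin[OF subU1 X2(1) U1X2 X0_ssum X0_ssum] by auto

lemma P1_U1: "u \<in> U1 \<Longrightarrow> P1 u = u"
  unfolding P1_def using proj_props(1)[OF subU1 X2(1) U1X2, of u u 0] subspace_0[OF X2(1)] by simp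

lemma P2_lin: "x \<in> X0 \<Longrightarrow> y \<in> X0 \<Longrightarrow> (s a x + y) - P1 (s a x + y) = s a (x - P1 x) + (y - P1 y)"
  using P1_lin by (simp add: algebra_simps)

lemma beta_conj: "conjlin_on X0 (\<lambda>y. beta y x)"
  unfolding conjlin_on_def
proof (intro allI ballI)
  fix a y y' assume yy: "y \<in> X0" "y' \<in> X0"
  have e1: "P1 (s a y + y') = s a (P1 y) + P1 y'" using P1_lin yy by blast
  have e2: "s a y + y' - P1 (s a y + y') = s a (y - P1 y) + (y' - P1 y')" using P2_lin yy by blast
  show "beta (s a y + y') x = sig a * beta y x + beta y' x"
    unfolding beta_def e2 unfolding e1 om_addl om_scalel q_addl q_scalel by (simp add: algebra_simps)
qed

lemma beta_klin: "klin_on X0 (\<lambda>x. beta y x)"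
  unfolding klin_on_def
proof (intro allI ballI)
  fix a x x' assume xx: "x \<in> X0" "x' \<in> X0"
  have e2: "s a x + x' - P1 (s a x + x') = s a (x - P1 x) + (x' - P1 x')" using P2_lin xx by blast
  show "beta y (s a x + x') = a * beta y x + beta y x'"
    unfolding beta_def e2 om_addr om_scaler q_addr q_scaler by (simp add: algebra_simps)
qed

lemma beta_sym:
  assumes "x \<in> X0" "y \<in> X0"
  shows "beta x y + eps * sig (beta y x) = om x y"
proof -
  define a where "a = P1 x"
  define a' where "a' = P1 y"
  define c where "c = x - a"
  define c' where "c' = y - a'"
  have aa: "om a a' = 0" unfolding a_def a'_def using P1_in assms isoU1 by blast
  have x: "x = a + c" and y: "y = a' + c'" unfolding c_def c'_def by auto
  have "beta x y = om a y + q c c'" unfolding beta_def a_def a'_def c_def c'_def by simp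
  moreover have "eps * sig (beta y x) = om x a' + eps * sig (q c' c)"
    unfolding beta_def a_def a'_def c_def c'_def by (simp add: sig_add algebra_simps om_sym[of x])
  moreover have "om x y = om a a' + om a c' + om c a' + om c c'"
    unfolding x y by (simp add: om_addl om_addr)
  moreover have "om a y = om a a' + om a c'" unfolding y by (simp add: om_addr)
  moreover have "om x a' = om a a' + om c a'" unfolding x by (simp add: om_addl)
  ultimately show ?thesis using aa by (simp add: omega_def)
qed

lemma beta_Q:
  assumes "x \<in> X0"
  shows "q x x - beta x x \<in> Lam"
proof -
  define a where "a = P1 x"
  define c where "c = x - a"
  have x: "x = a + c" unfolding c_def by auto
  have aU: "a \<in> U1" unfolding a_def using P1_in assms by blast
  have "beta x x = om a a + om a c + q c c" unfolding beta_def a_def[symmetric] c_def[symmetric]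
    using x by (metis om_addr)
  hence bx: "beta x x = om a c + q c c" using isoU1[OF aU aU] by simp
  have e: "q x x - beta x x = (q (a + c) (a + c) - (q a a + q c c + om a c)) + q a a"
    unfolding bx by (subst (1 2) x) (simp add: algebra_simps)
  show ?thesis unfolding e using Q_add[of a c] QU1[OF aU] by (rule Lam_add)
qed

lemma beta_U1: "u \<in> U1 \<Longrightarrow> y \<in> X0 \<Longrightarrow> beta y u = 0"
  unfolding beta_def using P1_U1 P1_in isoU1 by simp

lemma T_W: "T x \<in> W"
  unfolding T_def using wf(1) by (intro subspace_sum[OF subW] subspace_scale[OF subW]) auto

lemma T_lin: "is_linear_on s X0 T"
  unfolding is_linear_on_def T_def
proof (intro allI ballI)
  fix a x y assume "x \<in> X0" "y \<in> X0"
  hence "beta b (s a x + y) = a * beta b x + beta b y" for b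
    using beta_klin unfolding klin_on_def by blast
  thus "(\<Sum>b\<in>B. s (beta b (s a x + y)) (wf b)) =
    s a (\<Sum>b\<in>B. s (beta b x) (wf b)) + (\<Sum>b\<in>B. s (beta b y) (wf b))"
    by (simp add: scale_sum_right scale_left_distrib sum.distrib)
qed

lemma T_om: "y \<in> X0 \<Longrightarrow> om y (T x) = beta y x"
  unfolding T_def using rep1[OF beta_conj] by blast

lemma T_U1: "u \<in> U1 \<Longrightarrow> T u = 0"
  unfolding T_def using beta_U1 BX0 by (auto intro!: sum.neutral)

lemma T0: "T 0 = 0" using lin_0[OF T_lin X0(1)] .

lemma om_YW: "w \<in> W \<Longrightarrow> om (x - T x) w = om x w"
  using isoW[OF T_W] by (simp add: om_diffl)

lemma Y_sub: "subspace Y"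
  unfolding Y_def
proof (intro subspaceI)
  show "0 \<in> (\<lambda>x. x - T x) ` X0" by (rule image_eqI[of _ _ 0]) (simp_all add: T0 subspace_0[OF X0(1)])
next
  fix x y assume "x \<in> (\<lambda>x. x - T x) ` X0" "y \<in> (\<lambda>x. x - T x) ` X0"
  then obtain x0 y0 where "x0 \<in> X0" "y0 \<in> X0" "x = x0 - T x0" "y = y0 - T y0" by blast
  moreover have "T (x0 + y0) = T x0 + T y0" using lin_add[OF T_lin] calculation by blast
  moreover have "x0 + y0 \<in> X0" using calculation subspace_add[OF X0(1)] by blast
  moreover have "x + y = (x0 + y0) - T (x0 + y0)"
    unfolding \<open>x = x0 - T x0\<close> \<open>y = y0 - T y0\<close> \<open>T (x0 + y0) = T x0 + T y0\<close> by (simp add: algebra_simps)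
  ultimately show "x + y \<in> (\<lambda>x. x - T x) ` X0"
    by (intro image_eqI[of _ _ "x0 + y0"]) auto
next
  fix c x assume "x \<in> (\<lambda>x. x - T x) ` X0"
  then obtain x0 where "x0 \<in> X0" "x = x0 - T x0" by blast
  moreover have "T (s c x0) = s c (T x0)" using lin_scale[OF T_lin X0(1)] calculation by blast
  moreover have "s c x0 \<in> X0" using calculation subspace_scale[OF X0(1)] by blast
  moreover have "s c x = s c x0 - T (s c x0)"
    unfolding \<open>x = x0 - T x0\<close> \<open>T (s c x0) = s c (T x0)\<close> by (simp add: algebra_simps)
  ultimately show "s c x \<in> (\<lambda>x. x - T x) ` X0"
    by (intro image_eqI[of _ _ "s c x0"]) auto
qed

lemma Y_iso: "y \<in> Y \<Longrightarrow> z \<in> Y \<Longrightarrow> om y z = 0"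
proof -
  assume "y \<in> Y" "z \<in> Y"
  then obtain x x' where x: "x \<in> X0" "x' \<in> X0" "y = x - T x" "z = x' - T x'" unfolding Y_def by blast
  have "om y z = om x x' - om x (T x') - om (T x) x' + om (T x) (T x')"
    unfolding x by (simp add: om_diffl om_diffr)
  also have "\<dots> = om x x' - beta x x' - eps * sig (beta x' x)"
    using T_om x isoW[OF T_W T_W] om_sym[of "T x" x'] by simp
  also have "\<dots> = 0" using beta_sym[OF x(1,2)] by (simp add: algebra_simps)
  finally show ?thesis .
qed

lemma Y_Q: "y \<in> Y \<Longrightarrow> q y y \<in> Lam"
proof -
  assume "y \<in> Y"
  then obtain x where x: "x \<in> X0" "y = x - T x" unfolding Y_def by blast
  define D where "D = q (x + - T x) (x + - T x) - (q x x + q (- T x) (- T x) + om x (- T x))"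
  have DL: "D \<in> Lam" unfolding D_def by (rule Q_add)
  have ov: "om x (- T x) = - beta x x" using T_om[OF x(1)] by (simp add: om_negr)
  have e: "q y y = D + ((q x x - beta x x) + q (T x) (T x))"
    unfolding D_def ov Q_neg x(2) by (simp add: algebra_simps)
  have "q x x - beta x x + q (T x) (T x) \<in> Lam"
    using beta_Q[OF x(1)] QW[OF T_W] Lam_add by blast
  thus ?thesis unfolding e using DL Lam_add by blast
qed

lemma U1_Y: "U1 \<subseteq> Y"
  unfolding Y_def using T_U1 X0(2) by (force intro: image_eqI)

lemma Y_Wp: "Y \<inter> Wp = {0}"
proof -
  have "y = 0" if yY: "y \<in> Y \<inter> Wp" for y
  proof -
    obtain x where x: "x \<in> X0" "y = x - T x" "y \<in> Wp" using yY unfolding Y_def by blast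
    have "x = y + T x" using x by simp
    hence "x \<in> Wp" using x(3) W_Wp T_W subspace_add[OF subWp] by (metis subsetD)
    hence "x = 0" using x(1) X0(3) by blast
    thus "y = 0" using x T0 by simp
  qed
  thus ?thesis using subspace_0[OF Y_sub] subspace_0[OF subWp] by blast
qed

lemma Y_span: "\<exists>d\<in>Wp. \<exists>y\<in>Y. v = d + y"
proof -
  obtain x d where xd: "x \<in> X0" "d \<in> Wp" "v = x + d" using X0(4) by blast
  have "T x + d \<in> Wp" using xd W_Wp T_W subspace_add[OF subWp] by blast
  moreover have "x - T x \<in> Y" unfolding Y_def using xd by blast
  moreover have "v = (T x + d) + (x - T x)" using xd by simp
  ultimately show ?thesis by blast
qed

lemma Y_rep2:
  assumes "klin_on W \<psi>" "\<And>r. r \<in> R \<Longrightarrow> \<psi> r = 0"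
  shows "\<exists>y\<in>Y. \<forall>w\<in>W. om y w = \<psi> w"
proof -
  define x where "x = (\<Sum>b\<in>B. s (sig (\<psi> (wf b))) b)"
  have "x \<in> X0" unfolding x_def B(3)[symmetric] by (intro span_sum span_scale span_base)
  hence "x - T x \<in> Y" unfolding Y_def by blast
  moreover have "\<forall>w\<in>W. om (x - T x) w = \<psi> w" using rep2[OF assms] om_YW unfolding x_def by simp
  ultimately show ?thesis by blast
qed

lemma Y_rep1: "\<exists>w\<in>W. \<forall>y\<in>Y. om y w = om y v"
proof -
  define \<phi> where "\<phi> x = om (x - T x) v" for x
  have "conjlin_on X0 \<phi>"
    unfolding conjlin_on_def \<phi>_def
  proof (intro allI ballI)
    fix a x y assume xy: "x \<in> X0" "y \<in> X0"
    have "T (s a x + y) = s a (T x) + T y" using T_lin xy unfolding is_linear_on_def by blast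
    hence e: "s a x + y - T (s a x + y) = s a (x - T x) + (y - T y)" by (simp add: algebra_simps)
    show "om (s a x + y - T (s a x + y)) v = sig a * om (x - T x) v + om (y - T y) v"
      unfolding e by (simp add: om_addl om_scalel)
  qed
  note r = rep1[OF this]
  define w where "w = (\<Sum>b\<in>B. s (\<phi> b) (wf b))"
  have "w \<in> W" unfolding w_def using wf(1) by (intro subspace_sum[OF subW] subspace_scale[OF subW]) auto
  moreover have "\<forall>y\<in>Y. om y w = om y v"
  proof
    fix y assume "y \<in> Y"
    then obtain x where x: "x \<in> X0" "y = x - T x" unfolding Y_def by blast
    have "om y w = om x w" using om_YW[OF \<open>w \<in> W\<close>] x by simp
    also have "\<dots> = \<phi> x" using r x unfolding w_def by blast
    finally show "om y w = om y v" using x \<phi>_def by simp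
  qed
  ultimately show ?thesis by blast
qed

end

context wctx
begin

lemma decomp_exists:
  "\<exists>C Y. subspace C \<and> C \<subseteq> Wp \<and> C \<inter> W = {0} \<and> (\<forall>v\<in>Wp. \<exists>a\<in>W. \<exists>c\<in>C. v = a + c) \<and>
     subspace Y \<and> (\<forall>y\<in>Y. \<forall>z\<in>Y. om y z = 0) \<and> (\<forall>y\<in>Y. q y y \<in> Lam) \<and> Y \<inter> Wp = {0} \<and>
     (\<forall>v. \<exists>d\<in>Wp. \<exists>y\<in>Y. v = d + y) \<and> U1 \<subseteq> Y \<and> (\<forall>c\<in>C. \<forall>y\<in>Y. om y c = 0) \<and>
     (\<forall>\<psi>. klin_on W \<psi> \<and> (\<forall>r\<in>R. \<psi> r = 0) \<longrightarrow> (\<exists>y\<in>Y. \<forall>w\<in>W. om y w = \<psi> w))"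
proof -
  obtain X0 where X0: "subspace X0" "U1 \<subseteq> X0" "X0 \<inter> Wp = {0}" "\<forall>v. \<exists>x\<in>X0. \<exists>b\<in>Wp. v = x + b"
    using gc_full[OF subU1 subWp U1Wp] by blast
  obtain X2 where X2: "subspace X2" "X2 \<subseteq> X0" "X2 \<inter> U1 = {0}" "\<forall>v\<in>X0. \<exists>a\<in>U1. \<exists>c\<in>X2. v = a + c"
    using gc_rel[OF subU1 X0(1)] by blast
  obtain B where B: "finite B" "B \<subseteq> X0" "independent B" "span B = X0" using fin_basis[OF X0(1)] by blast
  have nd: "x = 0" if "x \<in> span B" "\<forall>w\<in>W. om x w = 0" for x
  proof -
    have "x \<in> Wp" using that unfolding perp_def by auto
    thus ?thesis using that(1) B(4) X0(3) by blast
  qed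
  obtain wf where wf: "\<forall>b\<in>B. wf b \<in> W" "\<forall>b\<in>B. \<forall>b'\<in>B. om b (wf b') = (if b = b' then 1 else 0)"
    using dual_family[OF B(1) B(3) subW nd] by blast
  have "cons s sig eps Lam q W U1 X0 X2 B wf"
    by (intro cons.intro wctx.intro fsp_axioms wctx_axioms cons_axioms.intro) (use X0 X2 B wf in auto)
  then interpret c: cons s sig eps Lam q W U1 X0 X2 B wf .
  define D where "D = Wp \<inter> {z. \<forall>y\<in>c.Y. om y z = 0}"
  have subD: "subspace D" unfolding D_def
    by (intro subspace_inter subWp) (auto intro!: subspaceI simp: om_addr om_scaler)
  obtain C where C: "subspace C" "C \<subseteq> D" "C \<inter> W = {0}" "\<forall>v\<in>D. \<exists>a\<in>W. \<exists>c\<in>C. v = a + c"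
    using gc_rel[OF subW subD] by blast
  have "\<forall>v\<in>Wp. \<exists>a\<in>W. \<exists>c\<in>C. v = a + c"
  proof
    fix v assume v: "v \<in> Wp"
    obtain w where w: "w \<in> W" "\<forall>y\<in>c.Y. om y w = om y v" using c.Y_rep1 by blast
    have "v - w \<in> D" unfolding D_def using v w W_Wp subspace_diff[OF subWp] by (auto simp: om_diffr)
    then obtain a c where ac: "a \<in> W" "c \<in> C" "v - w = a + c" using C(4) by blast
    hence "v = (w + a) + c" by (simp add: algebra_simps)
    moreover have "w + a \<in> W" using w ac subspace_add[OF subW] by blast
    ultimately show "\<exists>a\<in>W. \<exists>c\<in>C. v = a + c" using ac by blast
  qed
  moreover have "C \<subseteq> Wp" "\<forall>c\<in>C. \<forall>y\<in>c.Y. om y c = 0" using C(2) unfolding D_def by auto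
  ultimately show ?thesis
    apply -
    apply (rule exI[of _ C], rule exI[of _ c.Y], intro conjI)
    apply (rule C(1))
    apply blast
    apply (rule C(3))
    apply blast
    apply (rule c.Y_sub)
    using c.Y_iso apply blast
    using c.Y_Q apply blast
    apply (rule c.Y_Wp)
    using c.Y_span apply blast
    apply (rule c.U1_Y)
    apply blast
    using c.Y_rep2 by blast
qed

end

locale dec = wctx +
  fixes C Y
  assumes C: "subspace C" "C \<subseteq> Wp" "C \<inter> W = {0}" "\<And>v. v \<in> Wp \<Longrightarrow> \<exists>a\<in>W. \<exists>c\<in>C. v = a + c"
    and Y: "subspace Y" "\<And>y z. y \<in> Y \<Longrightarrow> z \<in> Y \<Longrightarrow> om y z = 0" "\<And>y. y \<in> Y \<Longrightarrow> q y y \<in> Lam"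
      "Y \<inter> Wp = {0}" "\<And>v. \<exists>d\<in>Wp. \<exists>y\<in>Y. v = d + y" "U1 \<subseteq> Y"
    and CY: "\<And>c y. c \<in> C \<Longrightarrow> y \<in> Y \<Longrightarrow> om y c = 0"
    and rep: "\<And>\<psi>. klin_on W \<psi> \<Longrightarrow> (\<And>r. r \<in> R \<Longrightarrow> \<psi> r = 0) \<Longrightarrow> \<exists>y\<in>Y. \<forall>w\<in>W. om y w = \<psi> w"
begin

definition "pY v = proj Y Wp v"
definition "pW v = proj W C (v - pY v)"
definition "pC v = (v - pY v) - pW v"

lemma YWp: "Y \<inter> Wp = {0}" using Y(4) .
lemma WC: "W \<inter> C = {0}" using C(3) by blast

lemma all_ssum: "v \<in> ssum Y Wp"
proof -
  obtain d y where dy: "d \<in> Wp" "y \<in> Y" "v = d + y" using Y(5) by blast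
  hence "v = y + d" by (simp add: add.commute)
  thus ?thesis using dy by blast
qed

lemma Wp_ssum: "v \<in> Wp \<Longrightarrow> v \<in> ssum W C"
  using C(4) by blast

lemma pY_in: "pY v \<in> Y" and pY_d: "v - pY v \<in> Wp"
  unfolding pY_def using proj_in[OF Y(1) subWp YWp all_ssum] by auto

lemma pW_in: "pW v \<in> W" and pC_in: "pC v \<in> C"
  unfolding pW_def pC_def using proj_in[OF subW C(1) WC Wp_ssum[OF pY_d]] by auto

lemma decomp: "v = pW v + pC v + pY v"
  unfolding pC_def by simp

lemma decomp_unique:
  assumes "a \<in> W" "c \<in> C" "y \<in> Y" "v = a + c + y"
  shows "pW v = a" "pC v = c" "pY v = y"
proof -
  have "a + c \<in> Wp" using assms W_Wp C(2) subspace_add[OF subWp] by blast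
  hence py: "pY v = y" unfolding pY_def using proj_props(1)[OF Y(1) subWp YWp, of v y "a + c"] assms
    by (simp add: add.commute)
  show "pY v = y" by (rule py)
  have pw: "pW v = a" unfolding pW_def py using proj_props(1)[OF subW C(1) WC, of "v - y" a c] assms by simp
  show "pW v = a" by (rule pw)
  show "pC v = c" unfolding pC_def py pw using assms by simp
qed

lemma proj_lin_all:
  "pW (s a v + v') = s a (pW v) + pW v'" "pC (s a v + v') = s a (pC v) + pC v'"
  "pY (s a v + v') = s a (pY v) + pY v'"
proof -
  have "s a v + v' = s a (pW v + pC v + pY v) + (pW v' + pC v' + pY v')" by (metis decomp)
  also have "\<dots> = (s a (pW v) + pW v') + (s a (pC v) + pC v') + (s a (pY v) + pY v')"
    by (simp add: algebra_simps)
  finally have e: "s a v + v' = (s a (pW v) + pW v') + (s a (pC v) + pC v') + (s a (pY v) + pY v')" .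
  have w: "s a (pW v) + pW v' \<in> W" using pW_in subspace_add[OF subW] subspace_scale[OF subW] by blast
  have c: "s a (pC v) + pC v' \<in> C" using pC_in subspace_add[OF C(1)] subspace_scale[OF C(1)] by blast
  have y: "s a (pY v) + pY v' \<in> Y" using pY_in subspace_add[OF Y(1)] subspace_scale[OF Y(1)] by blast
  show "pW (s a v + v') = s a (pW v) + pW v'" "pC (s a v + v') = s a (pC v) + pC v'"
    "pY (s a v + v') = s a (pY v) + pY v'" using decomp_unique[OF w c y e] by auto
qed

lemma pW_W: "a \<in> W \<Longrightarrow> pW a = a" and pC_W: "a \<in> W \<Longrightarrow> pC a = 0" and pY_W: "a \<in> W \<Longrightarrow> pY a = 0"
  using decomp_unique[of a 0 0 a] subspace_0[OF C(1)] subspace_0[OF Y(1)] by auto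

lemma pY_Wp: "d \<in> Wp \<Longrightarrow> pY d = 0"
proof -
  assume d: "d \<in> Wp"
  then obtain a c where "a \<in> W" "c \<in> C" "d = a + c" using C(4) by blast
  thus ?thesis using decomp_unique(3)[of a c 0 d] subspace_0[OF Y(1)] by auto
qed

lemma pC_C: "c \<in> C \<Longrightarrow> pC c = c" and pW_C: "c \<in> C \<Longrightarrow> pW c = 0" and pY_C: "c \<in> C \<Longrightarrow> pY c = 0"
  using decomp_unique[of 0 c 0 c] subspace_0[OF subW] subspace_0[OF Y(1)] by auto

lemma pY_Y: "y \<in> Y \<Longrightarrow> pY y = y" and pW_Y: "y \<in> Y \<Longrightarrow> pW y = 0" and pC_Y: "y \<in> Y \<Longrightarrow> pC y = 0"
  using decomp_unique[of 0 0 y y] subspace_0[OF subW] subspace_0[OF C(1)] by auto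

end

context fsp
begin

lemma mem_coset: "z \<in> coset x A \<longleftrightarrow> z - x \<in> A"
  unfolding coset_def by (auto intro: image_eqI[of _ _ "z - x"])

lemma coset_eq: "subspace A \<Longrightarrow> coset x A = coset y A \<longleftrightarrow> x - y \<in> A"
proof
  assume A: "subspace A" and e: "coset x A = coset y A"
  have "x \<in> coset x A" using subspace_0[OF A] by (simp add: mem_coset)
  thus "x - y \<in> A" using e by (simp add: mem_coset)
next
  assume A: "subspace A" and d: "x - y \<in> A"
  show "coset x A = coset y A"
  proof (intro equalityI subsetI)
    fix z assume "z \<in> coset x A"
    hence "z - x \<in> A" by (simp add: mem_coset)
    hence "(z - x) + (x - y) \<in> A" using d subspace_add[OF A] by blast
    thus "z \<in> coset y A" by (simp add: mem_coset algebra_simps)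
  next
    fix z assume "z \<in> coset y A"
    hence "z - y \<in> A" by (simp add: mem_coset)
    hence "(z - y) - (x - y) \<in> A" using d subspace_diff[OF A] by blast
    thus "z \<in> coset x A" by (simp add: mem_coset algebra_simps)
  qed
qed

lemma coset_self: "subspace A \<Longrightarrow> x \<in> coset x A"
  using subspace_0 by (simp add: mem_coset)

lemma image_coset:
  assumes "\<And>x y. f (x + y) = f x + f y" "f ` A = A"
  shows "f ` coset x A = coset (f x) A"
  unfolding coset_def using assms by (simp add: image_image) (metis image_image)

end

context wctx
begin

abbreviation "Qt \<equiv> quot sig eps q W"

lemma Qt_mem: "Cs \<in> Qt \<longleftrightarrow> (\<exists>x\<in>Wp. Cs = coset x W)"
  unfolding quot_def by auto

lemma coset_in_Qt: "x \<in> Wp \<Longrightarrow> coset x W \<in> Qt" using Qt_mem by blast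

end

context dec
begin

definition "okg g \<longleftrightarrow> g \<in> Bij W \<and> is_linear_on s W g \<and> g ` R = R"
definition "okh h \<longleftrightarrow> h \<in> Bij Qt \<and> quot_linear s sig eps q W h \<and> quot_isometry sig eps Lam q W h"

definition "hh h c = pC (SOME y. y \<in> h (coset c W))"
definition "gv g y = (THE y'. y' \<in> Y \<and> (\<forall>w\<in>W. om y' (g w) = om y w))"
definition "F g h v = g (pW v) + hh h (pC v) + gv g (pY v)"

lemma pC_lin: "pC (v + v') = pC v + pC v'" "pC (v - v') = pC v - pC v'"
  using proj_lin_all(2)[of 1 v v'] proj_lin_all(2)[of "-1" v' v] by (auto simp: algebra_simps)

lemma hh_unique:
  assumes "c' \<in> C" "coset c' W = h (coset c W)"
  shows "hh h c = c'"
proof -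
  have ex: "\<exists>y. y \<in> h (coset c W)" using assms coset_self[OF subW] by blast
  define y where "y = (SOME y. y \<in> h (coset c W))"
  have "y \<in> coset c' W" using someI_ex[OF ex] assms(2) unfolding y_def by simp
  hence d: "y - c' \<in> W" by (simp add: mem_coset)
  have "pC y = pC (y - c') + pC c'" using pC_lin(1)[of "y - c'" c'] by simp
  also have "\<dots> = c'" using pC_W[OF d] pC_C[OF assms(1)] by simp
  finally show ?thesis unfolding hh_def y_def .
qed

context
  fixes h assumes h: "okh h"
begin

lemma h_Qt: "Cs \<in> Qt \<Longrightarrow> h Cs \<in> Qt"
  using h unfolding okh_def Bij_def bij_betw_def by auto

lemma hh_prop: assumes "c \<in> Wp" shows "hh h c \<in> C" "coset (hh h c) W = h (coset c W)"
proof -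
  obtain y0 where y0: "y0 \<in> Wp" "h (coset c W) = coset y0 W" using h_Qt[OF coset_in_Qt[OF assms]] Qt_mem by blast
  have "pC y0 \<in> C" by (rule pC_in)
  moreover have "coset (pC y0) W = h (coset c W)"
    unfolding y0(2)
  proof (subst coset_eq[OF subW])
    have "pY y0 = 0" using pY_Wp[OF y0(1)] .
    hence "pC y0 - y0 = - pW y0" using decomp[of y0] by (simp add: algebra_simps)
    thus "pC y0 - y0 \<in> W" using pW_in subspace_neg[OF subW] by simp
  qed
  ultimately have "hh h c = pC y0" using hh_unique by blast
  thus "hh h c \<in> C" "coset (hh h c) W = h (coset c W)" using \<open>pC y0 \<in> C\<close> \<open>coset (pC y0) W = h (coset c W)\<close> by auto
qed

lemma hh_mem: "c \<in> Wp \<Longrightarrow> hh h c \<in> h (coset c W)"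
  using hh_prop coset_self[OF subW] by metis

lemma hh_lin: assumes "c \<in> Wp" "c' \<in> Wp" shows "hh h (s a c + c') = s a (hh h c) + hh h c'"
proof (rule hh_unique)
  show "s a (hh h c) + hh h c' \<in> C" using hh_prop assms subspace_add[OF C(1)] subspace_scale[OF C(1)] by blast
  show "coset (s a (hh h c) + hh h c') W = h (coset (s a c + c') W)"
    using h hh_mem[OF assms(1)] hh_mem[OF assms(2)] assms unfolding okh_def quot_linear_def by metis
qed

lemma hh0: "hh h 0 = 0"
  using hh_lin[of 0 0 1] subspace_0[OF subWp] by simp

lemma hh_iso: assumes "c \<in> Wp" "c' \<in> Wp"
  shows "om (hh h c) (hh h c') = om c c'" "q (hh h c) (hh h c) - q c c \<in> Lam"
  using h hh_mem[OF assms(1)] hh_mem[OF assms(2)] assms unfolding okh_def quot_isometry_def by blast+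

lemma hh_inj: assumes "c \<in> C" "c' \<in> C" "hh h c = hh h c'" shows "c = c'"
proof -
  have cw: "c \<in> Wp" "c' \<in> Wp" using assms C(2) by auto
  have "h (coset c W) = h (coset c' W)" using hh_prop(2)[OF cw(1)] hh_prop(2)[OF cw(2)] assms(3) by simp
  moreover have "inj_on h Qt" using h unfolding okh_def Bij_def bij_betw_def by auto
  ultimately have "coset c W = coset c' W" using coset_in_Qt cw by (meson inj_onD)
  hence "c - c' \<in> W" using coset_eq[OF subW] by simp
  moreover have "c - c' \<in> C" using assms subspace_diff[OF C(1)] by blast
  ultimately show ?thesis using WC by (metis IntI singletonD eq_iff_diff_eq_0)
qed

lemma hh_surj: assumes "c' \<in> C" shows "\<exists>c\<in>C. hh h c = c'"
proof -
  have "coset c' W \<in> Qt" using assms C(2) coset_in_Qt by blast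
  moreover have "h ` Qt = Qt" using h unfolding okh_def Bij_def bij_betw_def by auto
  ultimately obtain Cs where Cs: "Cs \<in> Qt" "h Cs = coset c' W" by (metis imageE)
  then obtain x where x: "x \<in> Wp" "Cs = coset x W" using Qt_mem by blast
  have "pY x = 0" using pY_Wp[OF x(1)] .
  hence "x - pC x = pW x" using decomp[of x] by (simp add: algebra_simps)
  hence "coset (pC x) W = coset x W" using coset_eq[OF subW] pW_in by (metis minus_diff_eq subspace_neg[OF subW])
  hence "coset c' W = h (coset (pC x) W)" using Cs x by simp
  hence "hh h (pC x) = c'" using hh_unique assms by blast
  thus ?thesis using pC_in by blast
qed

end

context
  fixes g assumes g: "okg g"
begin

lemma gW: "w \<in> W \<Longrightarrow> g w \<in> W" using g unfolding okg_def Bij_def bij_betw_def by auto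
lemma g_lin: "is_linear_on s W g" using g unfolding okg_def by auto
lemma g_bij: "bij_betw g W W" using g unfolding okg_def Bij_def by auto
lemma gR: "g ` R = R" using g unfolding okg_def by auto

definition "ginv = inv_into W g"

lemma ginv_W: "w \<in> W \<Longrightarrow> ginv w \<in> W"
  unfolding ginv_def using g_bij by (metis bij_betw_def inv_into_into)
lemma g_ginv: "w \<in> W \<Longrightarrow> g (ginv w) = w"
  unfolding ginv_def using g_bij by (rule bij_betw_inv_into_right)
lemma ginv_g: "w \<in> W \<Longrightarrow> ginv (g w) = w"
  unfolding ginv_def using g_bij by (rule bij_betw_inv_into_left)

lemma ginv_lin: "w \<in> W \<Longrightarrow> w' \<in> W \<Longrightarrow> ginv (s a w + w') = s a (ginv w) + ginv w'"
proof -
  assume ww: "w \<in> W" "w' \<in> W"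
  have "g (s a (ginv w) + ginv w') = s a w + w'" using g_lin ginv_W g_ginv ww unfolding is_linear_on_def by metis
  moreover have "s a (ginv w) + ginv w' \<in> W" using ginv_W ww subspace_add[OF subW] subspace_scale[OF subW] by blast
  ultimately show ?thesis using ginv_g by metis
qed

lemma ginv_R: "r \<in> R \<Longrightarrow> ginv r \<in> R"
proof -
  assume r: "r \<in> R"
  then obtain r' where "r' \<in> R" "r = g r'" using gR by blast
  thus ?thesis using ginv_g RW by auto
qed

lemma gv_ex: "\<exists>y'\<in>Y. \<forall>w\<in>W. om y' (g w) = om y w"
proof -
  have "klin_on W (\<lambda>w. om y (ginv w))" unfolding klin_on_def
    by (auto simp: ginv_lin om_addr om_scaler mult.commute)
  moreover have "om y (ginv r) = 0" if "r \<in> R" for r using ginv_R[OF that] radE by blast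
  ultimately obtain y' where y': "y' \<in> Y" "\<forall>w\<in>W. om y' w = om y (ginv w)" using rep by blast
  have "\<forall>w\<in>W. om y' (g w) = om y w"
  proof
    fix w assume "w \<in> W"
    thus "om y' (g w) = om y w" using y'(2) gW[OF \<open>w \<in> W\<close>] ginv_g[OF \<open>w \<in> W\<close>] by metis
  qed
  thus ?thesis using y'(1) by blast
qed

lemma gv_uniq: assumes "y1 \<in> Y" "y2 \<in> Y" "\<forall>w\<in>W. om y1 (g w) = om y2 (g w)" shows "y1 = y2"
proof -
  have "y1 - y2 \<in> Wp" unfolding perp_def
  proof (safe)
    fix w assume "w \<in> W"
    hence "om (y1 - y2) (g (ginv w)) = 0" using assms(3) ginv_W by (simp add: om_diffl)
    thus "om (y1 - y2) w = 0" using g_ginv \<open>w \<in> W\<close> by simp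
  qed
  moreover have "y1 - y2 \<in> Y" using assms subspace_diff[OF Y(1)] by blast
  ultimately show ?thesis using YWp by (metis IntI singletonD eq_iff_diff_eq_0)
qed

lemma gv_eq: assumes "y' \<in> Y" "\<forall>w\<in>W. om y' (g w) = om y w" shows "gv g y = y'"
  unfolding gv_def using assms gv_uniq by (intro the_equality) auto

lemma gv_prop: "gv g y \<in> Y" "w \<in> W \<Longrightarrow> om (gv g y) (g w) = om y w"
  using gv_ex[of y] gv_eq by auto

lemma gv_lin: "gv g (s a y + y') = s a (gv g y) + gv g y'"
proof (rule gv_eq)
  show "s a (gv g y) + gv g y' \<in> Y" using gv_prop subspace_add[OF Y(1)] subspace_scale[OF Y(1)] by blast
  show "\<forall>w\<in>W. om (s a (gv g y) + gv g y') (g w) = om (s a y + y') w"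
    using gv_prop by (simp add: om_addl om_scalel)
qed

lemma gv0: "gv g 0 = 0" using gv_lin[of 1 0 0] by simp

lemma gv_inj: assumes "y1 \<in> Y" "y2 \<in> Y" "gv g y1 = gv g y2" shows "y1 = y2"
proof -
  have "\<forall>w\<in>W. om y1 w = om y2 w" using gv_prop(2)[of _ y1] gv_prop(2)[of _ y2] assms(3) by metis
  hence "y1 - y2 \<in> Wp" unfolding perp_def by (auto simp: om_diffl)
  moreover have "y1 - y2 \<in> Y" using assms subspace_diff[OF Y(1)] by blast
  ultimately show ?thesis using YWp by (metis IntI singletonD eq_iff_diff_eq_0)
qed

lemma gv_surj: assumes "y' \<in> Y" shows "\<exists>y\<in>Y. gv g y = y'"
proof -
  have "klin_on W (\<lambda>w. om y' (g w))" unfolding klin_on_def using g_lin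
    by (auto simp: is_linear_on_def om_addr om_scaler mult.commute)
  moreover have "om y' (g r) = 0" if "r \<in> R" for r using that gR radE by blast
  ultimately obtain y where "y \<in> Y" "\<forall>w\<in>W. om y w = om y' (g w)" using rep by blast
  thus ?thesis using gv_eq[OF assms] by metis
qed

end

end

context fsp
begin

lemma Q3: "q (x + y + z) (x + y + z) - (q x x + q y y + q z z + om x y + om x z + om y z) \<in> Lam"
proof -
  have "q (x + y + z) (x + y + z) - (q x x + q y y + q z z + om x y + om x z + om y z)
    = (q (x + y + z) (x + y + z) - (q (x + y) (x + y) + q z z + om (x + y) z))
      + (q (x + y) (x + y) - (q x x + q y y + om x y))"
    by (simp add: om_addl algebra_simps)
  thus ?thesis using Q_add[of "x + y" z] Q_add[of x y] Lam_add by metis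
qed

lemma om9: "om (x1 + x2 + x3) (y1 + y2 + y3) = om x1 y1 + om x1 y2 + om x1 y3 + om x2 y1 + om x2 y2 + om x2 y3
  + om x3 y1 + om x3 y2 + om x3 y3"
  by (simp add: om_addl om_addr algebra_simps)

end

context dec
begin

lemma pC_Wp: "pC v \<in> Wp" using pC_in C(2) by blast

context
  fixes g h assumes g: "okg g" and h: "okh h"
begin

lemma F_parts: "pW (F g h v) = g (pW v)" "pC (F g h v) = hh h (pC v)" "pY (F g h v) = gv g (pY v)"
  using decomp_unique[OF gW[OF g pW_in] hh_prop(1)[OF h pC_Wp] gv_prop(1)[OF g], of "F g h v"]
  unfolding F_def by auto

lemma F_lin: "F g h (s a v + v') = s a (F g h v) + F g h v'"
proof -
  have "g (pW (s a v + v')) = s a (g (pW v)) + g (pW v')"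
    unfolding proj_lin_all using g_lin[OF g] pW_in unfolding is_linear_on_def by blast
  moreover have "hh h (pC (s a v + v')) = s a (hh h (pC v)) + hh h (pC v')"
    unfolding proj_lin_all using hh_lin[OF h pC_Wp pC_Wp] .
  moreover have "gv g (pY (s a v + v')) = s a (gv g (pY v)) + gv g (pY v')"
    unfolding proj_lin_all using gv_lin[OF g] .
  ultimately show ?thesis unfolding F_def by (simp add: algebra_simps)
qed

lemma F_add: "F g h (v + v') = F g h v + F g h v'"
  using F_lin[of 1 v v'] by simp

lemma F_W: "a \<in> W \<Longrightarrow> F g h a = g a"
  unfolding F_def using pW_W pC_W pY_W hh0[OF h] gv0[OF g] by simp
lemma F_C: "c \<in> C \<Longrightarrow> F g h c = hh h c"
  unfolding F_def using pW_C pC_C pY_C gv0[OF g] lin_0[OF g_lin[OF g] subW] by simp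
lemma F_Y: "y \<in> Y \<Longrightarrow> F g h y = gv g y"
  unfolding F_def using pW_Y pC_Y pY_Y hh0[OF h] lin_0[OF g_lin[OF g] subW] by simp

lemma F_inj: "inj (F g h)"
proof (rule injI)
  fix v v' assume e: "F g h v = F g h v'"
  have "g (pW v) = g (pW v')" using F_parts(1)[of v] F_parts(1)[of v'] e by simp
  hence 1: "pW v = pW v'" using g_bij[OF g] pW_in by (metis bij_betw_inv_into_left)
  have "hh h (pC v) = hh h (pC v')" using F_parts(2)[of v] F_parts(2)[of v'] e by simp
  hence 2: "pC v = pC v'" using hh_inj[OF h pC_in pC_in] by blast
  have "gv g (pY v) = gv g (pY v')" using F_parts(3)[of v] F_parts(3)[of v'] e by simp
  hence 3: "pY v = pY v'" using gv_inj[OF g pY_in pY_in] by blast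
  show "v = v'" using decomp[of v] decomp[of v'] 1 2 3 by metis
qed

lemma F_surj: "surj (F g h)"
proof -
  have "u \<in> range (F g h)" for u
  proof -
    obtain a where a: "a \<in> W" "g a = pW u" using g_bij[OF g] pW_in by (metis bij_betw_iff_bijections)
    obtain c where c: "c \<in> C" "hh h c = pC u" using hh_surj[OF h pC_in] by blast
    obtain y where y: "y \<in> Y" "gv g y = pY u" using gv_surj[OF g pY_in] by blast
    have "F g h (a + c + y) = F g h a + F g h c + F g h y" using F_add by simp
    also have "\<dots> = u" using F_W[OF a(1)] F_C[OF c(1)] F_Y[OF y(1)] a c y decomp[of u] by simp
    finally show ?thesis by (metis rangeI)
  qed
  thus ?thesis by blast
qed

lemma F_bij: "F g h \<in> Bij UNIV"
  unfolding Bij_def using F_inj F_surj by (auto simp: bij_betw_def)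

lemma F_om: "om (F g h v) (F g h v') = om v v'"
proof -
  define a c y a' c' y' where "a = pW v" "c = pC v" "y = pY v" "a' = pW v'" "c' = pC v'" "y' = pY v'"
  have mem: "a \<in> W" "c \<in> C" "y \<in> Y" "a' \<in> W" "c' \<in> C" "y' \<in> Y"
    unfolding a_c_y_a'_c'_y'_def using pW_in pC_in pY_in by auto
  have cw: "c \<in> Wp" "c' \<in> Wp" using mem C(2) by auto
  have v: "v = a + c + y" "v' = a' + c' + y'" unfolding a_c_y_a'_c'_y'_def using decomp by auto
  have Fv: "F g h v = g a + hh h c + gv g y" "F g h v' = g a' + hh h c' + gv g y'"
    unfolding F_def a_c_y_a'_c'_y'_def by auto
  have gm: "g a \<in> W" "g a' \<in> W" "hh h c \<in> C" "hh h c' \<in> C" "gv g y \<in> Y" "gv g y' \<in> Y"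
    using gW[OF g] mem hh_prop(1)[OF h] cw gv_prop(1)[OF g] by auto
  have gmp: "hh h c \<in> Wp" "hh h c' \<in> Wp" using gm C(2) by auto
  have t1: "om (g a) (g a') = om a a'" using isoW gm mem by simp
  have t2: "om (g a) (hh h c') = om a c'" using WWp gm gmp mem cw by simp
  have t3: "om (g a) (gv g y') = om a y'"
    using om_sym[of "g a" "gv g y'"] gv_prop(2)[OF g mem(1), of y'] om_sym[of a y'] by simp
  have t4: "om (hh h c) (g a') = om c a'" using WpW gm gmp mem cw by simp
  have t5: "om (hh h c) (hh h c') = om c c'" using hh_iso(1)[OF h cw] .
  have t6: "om (hh h c) (gv g y') = om c y'"
    using CY[OF gm(3) gm(6)] CY[OF mem(2) mem(6)] om_zero_sym by metis
  have t7: "om (gv g y) (g a') = om y a'" using gv_prop(2)[OF g mem(4)] .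
  have t8: "om (gv g y) (hh h c') = om y c'" using CY[OF gm(4) gm(5)] CY[OF mem(5) mem(3)] by simp
  have t9: "om (gv g y) (gv g y') = om y y'" using Y(2) gm mem by simp
  show ?thesis unfolding Fv om9 t1 t2 t3 t4 t5 t6 t7 t8 t9 unfolding v om9 ..
qed

lemma F_Q: "q (F g h v) (F g h v) - q v v \<in> Lam"
proof -
  define a c y where "a = pW v" "c = pC v" "y = pY v"
  have mem: "a \<in> W" "c \<in> C" "y \<in> Y" unfolding a_c_y_def using pW_in pC_in pY_in by auto
  have cw: "c \<in> Wp" using mem C(2) by auto
  have v: "v = a + c + y" unfolding a_c_y_def using decomp by auto
  have Fv: "F g h v = g a + hh h c + gv g y" unfolding F_def a_c_y_def by auto
  have gm: "g a \<in> W" "hh h c \<in> C" "gv g y \<in> Y"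
    using gW[OF g] mem hh_prop(1)[OF h] cw gv_prop(1)[OF g] by auto
  have gmp: "hh h c \<in> Wp" using gm C(2) by auto
  have c1: "om (g a) (hh h c) = om a c" using WWp gm gmp mem cw by simp
  have c2: "om (g a) (gv g y) = om a y"
    using om_sym[of "g a" "gv g y"] gv_prop(2)[OF g mem(1), of y] om_sym[of a y] by simp
  have c3: "om (hh h c) (gv g y) = om c y"
    using CY[OF gm(2) gm(3)] CY[OF mem(2) mem(3)] om_zero_sym by metis
  define D1 where "D1 = q (g a + hh h c + gv g y) (g a + hh h c + gv g y) - (q (g a) (g a) + q (hh h c) (hh h c)
     + q (gv g y) (gv g y) + om (g a) (hh h c) + om (g a) (gv g y) + om (hh h c) (gv g y))"
  define D2 where "D2 = q (a + c + y) (a + c + y) - (q a a + q c c + q y y + om a c + om a y + om c y)"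
  have D: "D1 \<in> Lam" "D2 \<in> Lam" unfolding D1_def D2_def by (rule Q3)+
  have e: "q (F g h v) (F g h v) - q v v = ((D1 - D2) + ((q (g a) (g a) - q a a) + (q (hh h c) (hh h c) - q c c)))
     + (q (gv g y) (gv g y) - q y y)"
    unfolding Fv unfolding v D1_def D2_def c1 c2 c3 by (simp add: algebra_simps)
  have "q (g a) (g a) - q a a \<in> Lam" using QW gm mem Lam_diff by blast
  moreover have "q (hh h c) (hh h c) - q c c \<in> Lam" using hh_iso(2)[OF h cw cw] .
  moreover have "q (gv g y) (gv g y) - q y y \<in> Lam" using Y(3) gm mem Lam_diff by blast
  ultimately show ?thesis unfolding e using D Lam_add Lam_diff by metis
qed

lemma F_isometry: "isometry s sig eps Lam q (F g h)"
  unfolding isometry_def form_equiv_def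
proof (intro conjI allI)
  show "is_linear_on s UNIV (F g h)" unfolding is_linear_on_def using F_lin by blast
  fix v show "q (F g h v) (F g h v) - q v v \<in> Lam" by (rule F_Q)
next
  fix v w
  have "om (F g h w) (F g h v) = om w v" by (rule F_om)
  hence "q (F g h w) (F g h v) + eps * sig (q (F g h v) (F g h w)) = q w v + eps * sig (q v w)"
    by (simp add: omega_def)
  thus "q (F g h w) (F g h v) - q w v = - eps * sig (q (F g h v) (F g h w) - q v w)"
    by (simp add: sig_diff algebra_simps)
qed

lemma F_image_W: "F g h ` W = W"
proof -
  have "F g h ` W = g ` W" using F_W by (auto intro: image_eqI)
  thus ?thesis using g_bij[OF g] by (simp add: bij_betw_def)
qed

lemma F_restrict: "restrict (F g h) W = g"
proof
  fix x show "restrict (F g h) W x = g x"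
  proof (cases "x \<in> W")
    case True then show ?thesis using F_W by simp
  next
    case False
    have "g \<in> extensional W" using g unfolding okg_def Bij_def by auto
    then show ?thesis using False by (simp add: extensional_def)
  qed
qed

lemma F_quot: "restrict (\<lambda>Cs. F g h ` Cs) Qt = h"
proof
  fix Cs show "restrict (\<lambda>Cs. F g h ` Cs) Qt Cs = h Cs"
  proof (cases "Cs \<in> Qt")
    case True
    then obtain x where x: "x \<in> Wp" "Cs = coset x W" using Qt_mem by blast
    have "F g h ` Cs = coset (F g h x) W" unfolding x(2) by (rule image_coset[OF F_add F_image_W])
    also have "F g h x = g (pW x) + hh h (pC x)" unfolding F_def using pY_Wp[OF x(1)] gv0[OF g] by simp
    also have "coset (g (pW x) + hh h (pC x)) W = coset (hh h (pC x)) W"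
      using coset_eq[OF subW] gW[OF g pW_in] by simp
    also have "\<dots> = h (coset (pC x) W)" using hh_prop(2)[OF h pC_Wp] .
    also have "coset (pC x) W = coset x W"
    proof -
      have "x = pW x + pC x" using decomp[of x] pY_Wp[OF x(1)] by simp
      hence "pC x - x = - pW x" by (simp add: algebra_simps)
      thus ?thesis using coset_eq[OF subW] pW_in subspace_neg[OF subW] by metis
    qed
    finally show ?thesis using True x by simp
  next
    case False
    have "h \<in> extensional Qt" using h unfolding okh_def Bij_def by auto
    then show ?thesis using False by (simp add: extensional_def)
  qed
qed

end

lemma okg_comp: assumes "okg g1" "okg g2" shows "okg (compose W g1 g2)"
  unfolding okg_def
proof (intro conjI)
  show "compose W g1 g2 \<in> Bij W" using assms compose_Bij unfolding okg_def by blast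
  show "is_linear_on s W (compose W g1 g2)"
    unfolding is_linear_on_def compose_def using g_lin[OF assms(1)] g_lin[OF assms(2)] gW[OF assms(2)]
      subspace_add[OF subW] subspace_scale[OF subW] unfolding is_linear_on_def by auto
  have "compose W g1 g2 ` R = g1 ` g2 ` R" using RW unfolding compose_def by (auto simp: image_image)
  thus "compose W g1 g2 ` R = R" using gR assms by simp
qed

lemma F_comp:
  assumes "okg g1" "okg g2" "okh h1" "okh h2"
  shows "F (compose W g1 g2) (compose Qt h1 h2) v = F g1 h1 (F g2 h2 v)"
proof -
  have 1: "compose W g1 g2 (pW v) = g1 (pW (F g2 h2 v))" using F_parts(1)[OF assms(2,4)] pW_in
    by (simp add: compose_def)
  have "hh (compose Qt h1 h2) (pC v) = hh h1 (hh h2 (pC v))"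
  proof (rule hh_unique)
    have c2: "hh h2 (pC v) \<in> C" using hh_prop(1)[OF assms(4) pC_Wp] .
    thus "hh h1 (hh h2 (pC v)) \<in> C" using hh_prop(1)[OF assms(3)] C(2) by blast
    have "compose Qt h1 h2 (coset (pC v) W) = h1 (h2 (coset (pC v) W))"
      using coset_in_Qt[OF pC_Wp] by (simp add: compose_def)
    also have "\<dots> = h1 (coset (hh h2 (pC v)) W)" using hh_prop(2)[OF assms(4) pC_Wp] by simp
    also have "\<dots> = coset (hh h1 (hh h2 (pC v))) W" using hh_prop(2)[OF assms(3)] c2 C(2) by auto
    finally show "coset (hh h1 (hh h2 (pC v))) W = compose Qt h1 h2 (coset (pC v) W)" by simp
  qed
  hence 2: "hh (compose Qt h1 h2) (pC v) = hh h1 (pC (F g2 h2 v))" using F_parts(2)[OF assms(2,4)] by simp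
  have "gv (compose W g1 g2) (pY v) = gv g1 (gv g2 (pY v))"
  proof (rule gv_eq[OF okg_comp[OF assms(1,2)]])
    show "gv g1 (gv g2 (pY v)) \<in> Y" using gv_prop(1)[OF assms(1)] .
    show "\<forall>w\<in>W. om (gv g1 (gv g2 (pY v))) (compose W g1 g2 w) = om (pY v) w"
      using gv_prop(2)[OF assms(1)] gv_prop(2)[OF assms(2)] gW[OF assms(2)] by (simp add: compose_def)
  qed
  hence 3: "gv (compose W g1 g2) (pY v) = gv g1 (pY (F g2 h2 v))" using F_parts(3)[OF assms(2,4)] by simp
  show ?thesis unfolding F_def[of "compose W g1 g2"] 1 2 3 unfolding F_def[of g1] ..
qed

end

context fsp
begin

lemma iso_om: "isometry s sig eps Lam q f \<Longrightarrow> om (f v) (f w) = om v w"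
proof -
  assume "isometry s sig eps Lam q f"
  hence e: "q (f v) (f w) - q v w = - eps * sig (q (f w) (f v) - q w v)"
    unfolding isometry_def form_equiv_def by blast
  show ?thesis unfolding omega_def using e by (simp add: sig_diff algebra_simps)
qed

lemma iso_Q: "isometry s sig eps Lam q f \<Longrightarrow> q (f v) (f v) - q v v \<in> Lam"
  unfolding isometry_def form_equiv_def by blast

lemma iso_lin: "isometry s sig eps Lam q f \<Longrightarrow> f (s a x + y) = s a (f x) + f y"
  unfolding isometry_def is_linear_on_def by blast

lemma iso_add: "isometry s sig eps Lam q f \<Longrightarrow> f (x + y) = f x + f y"
  using iso_lin[of f 1 x y] by simp

lemma iso_sub: "isometry s sig eps Lam q f \<Longrightarrow> f (x - y) = f x - f y"
  using iso_lin[of f "-1" y x] by (simp add: algebra_simps)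

lemma Bij_UNIV: "f \<in> Bij UNIV \<Longrightarrow> bij f" unfolding Bij_def by auto

lemma iso_R:
  assumes "f \<in> Bij UNIV" "isometry s sig eps Lam q f"
  shows "f ` R = R"
proof (intro equalityI subsetI)
  fix x assume "x \<in> f ` R"
  then obtain r where r: "r \<in> R" "x = f r" by blast
  have "om u x = 0" for u
  proof -
    obtain u' where "u = f u'" using Bij_UNIV[OF assms(1)] by (metis bij_pointE)
    thus ?thesis using iso_om[OF assms(2)] r radE by simp
  qed
  moreover have "q x x \<in> Lam"
  proof -
    have "q x x = (q (f r) (f r) - q r r) + q r r" using r by simp
    thus ?thesis using iso_Q[OF assms(2), of r] radE(2)[OF r(1)] Lam_add by metis
  qed
  ultimately show "x \<in> R" by (rule radI)
next
  fix x assume x: "x \<in> R"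
  obtain r where r: "x = f r" using Bij_UNIV[OF assms(1)] by (metis bij_pointE)
  have "om u r = 0" for u using iso_om[OF assms(2), of u r] x r radE by simp
  moreover have "q r r \<in> Lam"
  proof -
    have "q r r = q x x - (q (f r) (f r) - q r r)" using r by simp
    thus ?thesis using iso_Q[OF assms(2), of r] radE(2)[OF x] Lam_diff by metis
  qed
  ultimately have "r \<in> R" by (rule radI)
  thus "x \<in> f ` R" using r by blast
qed

end

context wctx
begin

context
  fixes f assumes fb: "f \<in> Bij UNIV" and fi: "isometry s sig eps Lam q f" and fW: "f ` W = W"
begin

lemma f_Wp: "f ` Wp = Wp"
proof (intro equalityI subsetI)
  fix x assume "x \<in> f ` Wp"
  then obtain d where d: "d \<in> Wp" "x = f d" by blast
  show "x \<in> Wp" unfolding perp_def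
  proof safe
    fix w assume "w \<in> W"
    then obtain w' where "w' \<in> W" "w = f w'" using fW by blast
    thus "om x w = 0" using d iso_om[OF fi] WpW by simp
  qed
next
  fix x assume x: "x \<in> Wp"
  obtain d where d: "x = f d" using Bij_UNIV[OF fb] by (metis bij_pointE)
  have "d \<in> Wp" unfolding perp_def
  proof safe
    fix w assume "w \<in> W"
    hence "f w \<in> W" using fW by blast
    thus "om d w = 0" using x d iso_om[OF fi, of d w] WpW by simp
  qed
  thus "x \<in> f ` Wp" using d by blast
qed

lemma f_coset: "f ` coset x W = coset (f x) W"
  by (rule image_coset[OF iso_add[OF fi] fW])

lemma res_GL: "restrict f W \<in> Bij W" "is_linear_on s W (restrict f W)" "restrict f W ` R = R"
proof -
  have "bij_betw f W W" using bij_betw_subset[OF Bij_UNIV[OF fb, unfolded bij_def[symmetric]] subset_UNIV fW] .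
  moreover have "bij_betw (restrict f W) W W = bij_betw f W W" by (rule bij_betw_cong) simp
  ultimately have "bij_betw (restrict f W) W W" by simp
  thus "restrict f W \<in> Bij W" unfolding Bij_def by auto
  show "is_linear_on s W (restrict f W)" unfolding is_linear_on_def
    using iso_lin[OF fi] subspace_add[OF subW] subspace_scale[OF subW] by auto
  have "restrict f W ` R = f ` R" using RW by (auto simp: image_def)
  thus "restrict f W ` R = R" using iso_R[OF fb fi] by simp
qed

lemma res_Q: "restrict (\<lambda>Cs. f ` Cs) Qt \<in> Bij Qt"
  "quot_linear s sig eps q W (restrict (\<lambda>Cs. f ` Cs) Qt)"
  "quot_isometry sig eps Lam q W (restrict (\<lambda>Cs. f ` Cs) Qt)"
proof -
  have inQ: "f ` Cs \<in> Qt" if CsQ: "Cs \<in> Qt" for Cs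
  proof -
    obtain x where x: "x \<in> Wp" "Cs = coset x W" using CsQ Qt_mem by blast
    have "f x \<in> Wp" using f_Wp x(1) by blast
    thus ?thesis using coset_in_Qt f_coset x(2) by simp
  qed
  have "bij_betw (\<lambda>Cs. f ` Cs) Qt Qt"
    unfolding bij_betw_def
  proof
    show "inj_on (\<lambda>Cs. f ` Cs) Qt" using Bij_UNIV[OF fb] by (auto simp: inj_on_def bij_def inj_image_eq_iff)
    show "(\<lambda>Cs. f ` Cs) ` Qt = Qt"
    proof (intro equalityI subsetI)
      fix Cs assume "Cs \<in> (\<lambda>Cs. f ` Cs) ` Qt" thus "Cs \<in> Qt" using inQ by blast
    next
      fix Cs assume "Cs \<in> Qt"
      then obtain y where y: "y \<in> Wp" "Cs = coset y W" using Qt_mem by blast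
      then obtain x where x: "x \<in> Wp" "y = f x" using f_Wp by blast
      have "Cs = f ` coset x W" using y x f_coset by simp
      moreover have "coset x W \<in> Qt" using coset_in_Qt x(1) .
      ultimately show "Cs \<in> (\<lambda>Cs. f ` Cs) ` Qt" by blast
    qed
  qed
  moreover have "bij_betw (restrict (\<lambda>Cs. f ` Cs) Qt) Qt Qt = bij_betw (\<lambda>Cs. f ` Cs) Qt Qt"
    by (rule bij_betw_cong) simp
  ultimately have "bij_betw (restrict (\<lambda>Cs. f ` Cs) Qt) Qt Qt" by simp
  thus "restrict (\<lambda>Cs. f ` Cs) Qt \<in> Bij Qt" unfolding Bij_def by auto
  show "quot_linear s sig eps q W (restrict (\<lambda>Cs. f ` Cs) Qt)"
    unfolding quot_linear_def
  proof (intro allI impI)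
    fix a x y x' y' assume xy: "x \<in> Wp" "y \<in> Wp" and x': "x' \<in> restrict (\<lambda>Cs. f ` Cs) Qt (coset x W)"
      and y': "y' \<in> restrict (\<lambda>Cs. f ` Cs) Qt (coset y W)"
    have "x' \<in> coset (f x) W" "y' \<in> coset (f y) W" using x' y' coset_in_Qt xy f_coset by auto
    hence d: "x' - f x \<in> W" "y' - f y \<in> W" by (auto simp: mem_coset)
    have sxy: "s a x + y \<in> Wp" using xy subspace_add[OF subWp] subspace_scale[OF subWp] by blast
    have "restrict (\<lambda>Cs. f ` Cs) Qt (coset (s a x + y) W) = coset (s a (f x) + f y) W"
      using coset_in_Qt[OF sxy] f_coset iso_lin[OF fi] by simp
    also have "\<dots> = coset (s a x' + y') W"
    proof (subst coset_eq[OF subW])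
      have "s a (f x) + f y - (s a x' + y') = s a (- (x' - f x)) + (- (y' - f y))" by (simp add: algebra_simps)
      thus "s a (f x) + f y - (s a x' + y') \<in> W"
        using d subspace_add[OF subW] subspace_scale[OF subW] subspace_neg[OF subW] by metis
    qed
    finally show "restrict (\<lambda>Cs. f ` Cs) Qt (coset (s a x + y) W) = coset (s a x' + y') W" .
  qed
  show "quot_isometry sig eps Lam q W (restrict (\<lambda>Cs. f ` Cs) Qt)"
    unfolding quot_isometry_def
  proof (intro allI impI)
    fix x y x' y' assume xy: "x \<in> Wp" "y \<in> Wp" and x': "x' \<in> restrict (\<lambda>Cs. f ` Cs) Qt (coset x W)"
      and y': "y' \<in> restrict (\<lambda>Cs. f ` Cs) Qt (coset y W)"
    have "x' \<in> coset (f x) W" "y' \<in> coset (f y) W" using x' y' coset_in_Qt xy f_coset by auto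
    hence d: "x' - f x \<in> W" "y' - f y \<in> W" by (auto simp: mem_coset)
    have fxy: "f x \<in> Wp" "f y \<in> Wp" using f_Wp xy by auto
    define w1 w2 where "w1 = x' - f x" "w2 = y' - f y"
    have x'e: "x' = f x + w1" and y'e: "y' = f y + w2" unfolding w1_w2_def by auto
    have "om x' y' = om (f x) (f y) + om (f x) w2 + om w1 (f y) + om w1 w2"
      unfolding x'e y'e by (simp add: om_addl om_addr)
    also have "\<dots> = om x y" using iso_om[OF fi] WpW[OF fxy(1)] WWp[OF fxy(2)] isoW d
      unfolding w1_w2_def by simp
    finally have "om x' y' = om x y" .
    moreover have "q x' x' - q x x \<in> Lam"
    proof -
      have "q x' x' - q x x = (q (f x + w1) (f x + w1) - (q (f x) (f x) + q w1 w1 + om (f x) w1))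
        + q w1 w1 + (q (f x) (f x) - q x x)"
        using WpW[OF fxy(1)] d unfolding x'e w1_w2_def[symmetric] by (simp add: algebra_simps)
      thus ?thesis using Q_add QW d iso_Q[OF fi] Lam_add unfolding w1_w2_def by metis
    qed
    ultimately show "om x' y' = om x y \<and> q x' x' - q x x \<in> Lam" by blast
  qed
qed

end

end

lemma GE_carrier: "carrier (GE_stab s sig eps Lam q W) = {f \<in> Bij UNIV. isometry s sig eps Lam q f \<and> f ` W = W}"
  by (simp add: GE_stab_def BijGroup_def)
lemma GE_mult: "f1 \<in> Bij UNIV \<Longrightarrow> f2 \<in> Bij UNIV \<Longrightarrow> f1 \<otimes>\<^bsub>GE_stab s sig eps Lam q W\<^esub> f2 = compose UNIV f1 f2"
  by (simp add: GE_stab_def BijGroup_def)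
lemma AEU_carrier: "carrier (AEU_stab s sig eps Lam q U W) =
   {f \<in> Bij UNIV. isometry s sig eps Lam q f \<and> (\<forall>u\<in>U. f u = u) \<and> f ` W = W}"
  by (simp add: AEU_stab_def BijGroup_def)
lemma AEU_mult: "f1 \<in> Bij UNIV \<Longrightarrow> f2 \<in> Bij UNIV \<Longrightarrow> f1 \<otimes>\<^bsub>AEU_stab s sig eps Lam q U W\<^esub> f2 = compose UNIV f1 f2"
  by (simp add: AEU_stab_def BijGroup_def)
lemma GL_carrier: "carrier (GL_pres s W R) = {g \<in> Bij W. is_linear_on s W g \<and> g ` R = R}"
  by (simp add: GL_pres_def BijGroup_def)
lemma GL_mult: "g1 \<in> Bij W \<Longrightarrow> g2 \<in> Bij W \<Longrightarrow> g1 \<otimes>\<^bsub>GL_pres s W R\<^esub> g2 = compose W g1 g2"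
  by (simp add: GL_pres_def BijGroup_def)
lemma AT_carrier: "carrier (AT_id s W W0 R) = {g \<in> Bij W. is_linear_on s W g \<and> (\<forall>w\<in>W. g w - w \<in> W0) \<and> (\<forall>r\<in>R. g r = r)}"
  by (simp add: AT_id_def BijGroup_def)
lemma AT_mult: "g1 \<in> Bij W \<Longrightarrow> g2 \<in> Bij W \<Longrightarrow> g1 \<otimes>\<^bsub>AT_id s W W0 R\<^esub> g2 = compose W g1 g2"
  by (simp add: AT_id_def BijGroup_def)
lemma Gq_carrier: "carrier (G_quot s sig eps Lam q W) = {h \<in> Bij (quot sig eps q W).
   quot_linear s sig eps q W h \<and> quot_isometry sig eps Lam q W h}"
  by (simp add: G_quot_def BijGroup_def)
lemma Gq_mult: "h1 \<in> Bij (quot sig eps q W) \<Longrightarrow> h2 \<in> Bij (quot sig eps q W) \<Longrightarrow>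
   h1 \<otimes>\<^bsub>G_quot s sig eps Lam q W\<^esub> h2 = compose (quot sig eps q W) h1 h2"
  by (simp add: G_quot_def BijGroup_def)
lemma DP_carrier: "carrier (G \<times>\<times> H) = carrier G \<times> carrier H" by (simp add: DirProd_def)
lemma DP_mult: "(g1, h1) \<otimes>\<^bsub>G \<times>\<times> H\<^esub> (g2, h2) = (g1 \<otimes>\<^bsub>G\<^esub> g2, h1 \<otimes>\<^bsub>H\<^esub> h2)" by (simp add: DirProd_def)

lemma compose_UNIV: "compose UNIV f g = (\<lambda>x. f (g x))" by (simp add: compose_def restrict_def)

context wctx
begin

lemma res_mult:
  assumes "f1 \<in> Bij UNIV" "f2 \<in> Bij UNIV" "isometry s sig eps Lam q f2" "f2 ` W = W"
  shows "restrict (\<lambda>x. f1 (f2 x)) W = compose W (restrict f1 W) (restrict f2 W)"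
    "restrict (\<lambda>Cs. (\<lambda>x. f1 (f2 x)) ` Cs) Qt = compose Qt (restrict (\<lambda>Cs. f1 ` Cs) Qt) (restrict (\<lambda>Cs. f2 ` Cs) Qt)"
proof -
  show "restrict (\<lambda>x. f1 (f2 x)) W = compose W (restrict f1 W) (restrict f2 W)"
    using assms(4) by (auto simp: compose_def restrict_def fun_eq_iff)
  have "f2 ` Cs \<in> Qt" if "Cs \<in> Qt" for Cs
    using res_Q(1)[OF assms(2-4)] that unfolding Bij_def bij_betw_def by auto
  thus "restrict (\<lambda>Cs. (\<lambda>x. f1 (f2 x)) ` Cs) Qt = compose Qt (restrict (\<lambda>Cs. f1 ` Cs) Qt) (restrict (\<lambda>Cs. f2 ` Cs) Qt)"
    by (auto simp: compose_def restrict_def fun_eq_iff image_image)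
qed

end

context dec
begin

lemma okh_iff: "h \<in> carrier (G_quot s sig eps Lam q W) \<longleftrightarrow> okh h"
  unfolding okh_def Gq_carrier by simp

lemma part1: "split_surjective (GE_stab s sig eps Lam q W)
    (GL_pres s W R \<times>\<times> G_quot s sig eps Lam q W) (res_ind sig eps q W)"
  unfolding split_surjective_def
proof (intro conjI)
  show "res_ind sig eps q W \<in> hom (GE_stab s sig eps Lam q W) (GL_pres s W R \<times>\<times> G_quot s sig eps Lam q W)"
    unfolding hom_def
  proof (intro CollectI conjI ballI funcsetI)
    fix f assume "f \<in> carrier (GE_stab s sig eps Lam q W)"
    hence f: "f \<in> Bij UNIV" "isometry s sig eps Lam q f" "f ` W = W" unfolding GE_carrier by auto
    show "res_ind sig eps q W f \<in> carrier (GL_pres s W R \<times>\<times> G_quot s sig eps Lam q W)"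
      unfolding res_ind_def DP_carrier GL_carrier Gq_carrier using res_GL[OF f] res_Q[OF f] by auto
  next
    fix f1 f2 assume "f1 \<in> carrier (GE_stab s sig eps Lam q W)" "f2 \<in> carrier (GE_stab s sig eps Lam q W)"
    hence f1: "f1 \<in> Bij UNIV" "isometry s sig eps Lam q f1" "f1 ` W = W"
      and f2: "f2 \<in> Bij UNIV" "isometry s sig eps Lam q f2" "f2 ` W = W" unfolding GE_carrier by auto
    show "res_ind sig eps q W (f1 \<otimes>\<^bsub>GE_stab s sig eps Lam q W\<^esub> f2) =
      res_ind sig eps q W f1 \<otimes>\<^bsub>GL_pres s W R \<times>\<times> G_quot s sig eps Lam q W\<^esub> res_ind sig eps q W f2"
      unfolding GE_mult[OF f1(1) f2(1)] res_ind_def DP_mult compose_UNIV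
        GL_mult[OF res_GL(1)[OF f1] res_GL(1)[OF f2]] Gq_mult[OF res_Q(1)[OF f1] res_Q(1)[OF f2]]
      using res_mult[OF f1(1) f2] by simp
  qed
  let ?t = "\<lambda>(g, h). F g h"
  have tc: "okg g \<and> okh h" if "(g, h) \<in> carrier (GL_pres s W R \<times>\<times> G_quot s sig eps Lam q W)" for g h
    using that by (auto simp: DP_carrier GL_carrier okg_def okh_iff)
  have "?t \<in> hom (GL_pres s W R \<times>\<times> G_quot s sig eps Lam q W) (GE_stab s sig eps Lam q W)"
    unfolding hom_def
  proof (intro CollectI conjI ballI funcsetI)
    fix x assume "x \<in> carrier (GL_pres s W R \<times>\<times> G_quot s sig eps Lam q W)"
    then obtain g h where x: "x = (g, h)" "okg g" "okh h" using tc by (metis surj_pair)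
    show "?t x \<in> carrier (GE_stab s sig eps Lam q W)"
      unfolding GE_carrier x using F_bij[OF x(2,3)] F_isometry[OF x(2,3)] F_image_W[OF x(2,3)] by simp
  next
    fix x y assume "x \<in> carrier (GL_pres s W R \<times>\<times> G_quot s sig eps Lam q W)"
      "y \<in> carrier (GL_pres s W R \<times>\<times> G_quot s sig eps Lam q W)"
    then obtain g1 h1 g2 h2 where x: "x = (g1, h1)" "okg g1" "okh h1" and y: "y = (g2, h2)" "okg g2" "okh h2"
      using tc by (metis surj_pair)
    have b: "g1 \<in> Bij W" "g2 \<in> Bij W" "h1 \<in> Bij Qt" "h2 \<in> Bij Qt" using x y unfolding okg_def okh_def by auto
    have e: "F g1 h1 \<otimes>\<^bsub>GE_stab s sig eps Lam q W\<^esub> F g2 h2 = compose UNIV (F g1 h1) (F g2 h2)"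
      by (rule GE_mult[OF F_bij[OF x(2,3)] F_bij[OF y(2,3)]])
    show "?t (x \<otimes>\<^bsub>GL_pres s W R \<times>\<times> G_quot s sig eps Lam q W\<^esub> y) = ?t x \<otimes>\<^bsub>GE_stab s sig eps Lam q W\<^esub> ?t y"
      unfolding x(1) y(1) DP_mult GL_mult[OF b(1,2)] Gq_mult[OF b(3,4)]
      using F_comp[OF x(2) y(2) x(3) y(3)]
      by (simp add: e compose_UNIV fun_eq_iff)
  qed
  moreover have "\<forall>y\<in>carrier (GL_pres s W R \<times>\<times> G_quot s sig eps Lam q W). res_ind sig eps q W (?t y) = y"
  proof
    fix y assume "y \<in> carrier (GL_pres s W R \<times>\<times> G_quot s sig eps Lam q W)"
    then obtain g h where y: "y = (g, h)" "okg g" "okh h" using tc by (metis surj_pair)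
    show "res_ind sig eps q W (?t y) = y" unfolding y(1) res_ind_def using F_restrict[OF y(2,3)] F_quot[OF y(2,3)] by simp
  qed
  ultimately show "\<exists>t\<in>hom (GL_pres s W R \<times>\<times> G_quot s sig eps Lam q W) (GE_stab s sig eps Lam q W).
     \<forall>y\<in>carrier (GL_pres s W R \<times>\<times> G_quot s sig eps Lam q W). res_ind sig eps q W (t y) = y" by blast
qed

lemma part2:
  assumes U: "R \<subseteq> U" "\<And>u. u \<in> U \<Longrightarrow> \<exists>r\<in>R. \<exists>u1\<in>U1. u = r + u1" "U1 \<subseteq> U"
  shows "split_surjective (AEU_stab s sig eps Lam q U W)
    (AT_id s W (W \<inter> pp U) R \<times>\<times> G_quot s sig eps Lam q W) (res_ind sig eps q W)"
  unfolding split_surjective_def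
proof (intro conjI)
  show "res_ind sig eps q W \<in> hom (AEU_stab s sig eps Lam q U W) (AT_id s W (W \<inter> pp U) R \<times>\<times> G_quot s sig eps Lam q W)"
    unfolding hom_def
  proof (intro CollectI conjI ballI funcsetI)
    fix f assume "f \<in> carrier (AEU_stab s sig eps Lam q U W)"
    hence f: "f \<in> Bij UNIV" "isometry s sig eps Lam q f" "f ` W = W" and fU: "\<forall>u\<in>U. f u = u"
      unfolding AEU_carrier by auto
    have "\<forall>w\<in>W. restrict f W w - w \<in> W \<inter> pp U"
    proof
      fix w assume w: "w \<in> W"
      have "f w \<in> W" using f(3) w by blast
      hence "f w - w \<in> W" using w subspace_diff[OF subW] by blast
      moreover have "f w - w \<in> pp U" unfolding perp_def
      proof safe
        fix u assume u: "u \<in> U"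
        have "om (f w) u = om w u" using iso_om[OF f(2), of w u] fU u by simp
        thus "om (f w - w) u = 0" by (simp add: om_diffl)
      qed
      ultimately show "restrict f W w - w \<in> W \<inter> pp U" using w by simp
    qed
    moreover have "\<forall>r\<in>R. restrict f W r = r" using fU U(1) RW by auto
    ultimately show "res_ind sig eps q W f \<in> carrier (AT_id s W (W \<inter> pp U) R \<times>\<times> G_quot s sig eps Lam q W)"
      unfolding res_ind_def DP_carrier AT_carrier Gq_carrier using res_GL[OF f] res_Q[OF f] by auto
  next
    fix f1 f2 assume "f1 \<in> carrier (AEU_stab s sig eps Lam q U W)" "f2 \<in> carrier (AEU_stab s sig eps Lam q U W)"
    hence f1: "f1 \<in> Bij UNIV" "isometry s sig eps Lam q f1" "f1 ` W = W"
      and f2: "f2 \<in> Bij UNIV" "isometry s sig eps Lam q f2" "f2 ` W = W" unfolding AEU_carrier by auto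
    show "res_ind sig eps q W (f1 \<otimes>\<^bsub>AEU_stab s sig eps Lam q U W\<^esub> f2) =
      res_ind sig eps q W f1 \<otimes>\<^bsub>AT_id s W (W \<inter> pp U) R \<times>\<times> G_quot s sig eps Lam q W\<^esub> res_ind sig eps q W f2"
      unfolding AEU_mult[OF f1(1) f2(1)] res_ind_def DP_mult compose_UNIV
        AT_mult[OF res_GL(1)[OF f1] res_GL(1)[OF f2]] Gq_mult[OF res_Q(1)[OF f1] res_Q(1)[OF f2]]
      using res_mult[OF f1(1) f2] by simp
  qed
  let ?t = "\<lambda>(g, h). F g h"
  have tc: "okg g \<and> okh h \<and> (\<forall>w\<in>W. g w - w \<in> pp U) \<and> (\<forall>r\<in>R. g r = r)"
    if "(g, h) \<in> carrier (AT_id s W (W \<inter> pp U) R \<times>\<times> G_quot s sig eps Lam q W)" for g h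
  proof -
    have g: "g \<in> Bij W" "is_linear_on s W g" "\<forall>w\<in>W. g w - w \<in> W \<inter> pp U" "\<forall>r\<in>R. g r = r"
      using that unfolding DP_carrier AT_carrier by auto
    have "g ` R = R" using g(4) by (auto intro: image_eqI)
    thus ?thesis using g that by (auto simp: okg_def DP_carrier okh_iff)
  qed
  have tU: "F g h u = u" if tg: "okg g" "okh h" "\<forall>w\<in>W. g w - w \<in> pp U" "u \<in> U" "\<forall>r\<in>R. g r = r" for g h u
  proof -
    obtain r u1 where ru: "r \<in> R" "u1 \<in> U1" "u = r + u1" using U(2) tg(4) by blast
    have "gv g u1 = u1"
    proof (rule gv_eq[OF that(1)])
      show "u1 \<in> Y" using Y(6) ru by blast
      show "\<forall>w\<in>W. om u1 (g w) = om u1 w"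
      proof
        fix w assume "w \<in> W"
        hence "om (g w - w) u1 = 0" using that(3) ru(2) U(3) unfolding perp_def by blast
        hence "om u1 (g w - w) = 0" using om_zero_sym by blast
        thus "om u1 (g w) = om u1 w" by (simp add: om_diffr)
      qed
    qed
    moreover have "F g h r = r" using F_W[OF that(1,2)] ru(1) RW tg(5) by auto
    ultimately show ?thesis using F_add[OF that(1,2)] F_Y[OF that(1,2)] Y(6) ru by auto
  qed
  have "?t \<in> hom (AT_id s W (W \<inter> pp U) R \<times>\<times> G_quot s sig eps Lam q W) (AEU_stab s sig eps Lam q U W)"
    unfolding hom_def
  proof (intro CollectI conjI ballI funcsetI)
    fix x assume "x \<in> carrier (AT_id s W (W \<inter> pp U) R \<times>\<times> G_quot s sig eps Lam q W)"
    then obtain g h where x: "x = (g, h)" "okg g" "okh h" "\<forall>w\<in>W. g w - w \<in> pp U" "\<forall>r\<in>R. g r = r"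
      using tc by (metis surj_pair)
    show "?t x \<in> carrier (AEU_stab s sig eps Lam q U W)"
      unfolding AEU_carrier x using F_bij[OF x(2,3)] F_isometry[OF x(2,3)] F_image_W[OF x(2,3)] tU[OF x(2-4) _ x(5)] by simp
  next
    fix x y assume "x \<in> carrier (AT_id s W (W \<inter> pp U) R \<times>\<times> G_quot s sig eps Lam q W)"
      "y \<in> carrier (AT_id s W (W \<inter> pp U) R \<times>\<times> G_quot s sig eps Lam q W)"
    then obtain g1 h1 g2 h2 where x: "x = (g1, h1)" "okg g1" "okh h1" and y: "y = (g2, h2)" "okg g2" "okh h2"
      using tc by (metis surj_pair)
    have b: "g1 \<in> Bij W" "g2 \<in> Bij W" "h1 \<in> Bij Qt" "h2 \<in> Bij Qt" using x y unfolding okg_def okh_def by auto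
    have e: "F g1 h1 \<otimes>\<^bsub>AEU_stab s sig eps Lam q U W\<^esub> F g2 h2 = compose UNIV (F g1 h1) (F g2 h2)"
      by (rule AEU_mult[OF F_bij[OF x(2,3)] F_bij[OF y(2,3)]])
    show "?t (x \<otimes>\<^bsub>AT_id s W (W \<inter> pp U) R \<times>\<times> G_quot s sig eps Lam q W\<^esub> y) = ?t x \<otimes>\<^bsub>AEU_stab s sig eps Lam q U W\<^esub> ?t y"
      unfolding x(1) y(1) DP_mult AT_mult[OF b(1,2)] Gq_mult[OF b(3,4)]
      using F_comp[OF x(2) y(2) x(3) y(3)]
      by (simp add: e compose_UNIV fun_eq_iff)
  qed
  moreover have "\<forall>y\<in>carrier (AT_id s W (W \<inter> pp U) R \<times>\<times> G_quot s sig eps Lam q W). res_ind sig eps q W (?t y) = y"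
  proof
    fix y assume "y \<in> carrier (AT_id s W (W \<inter> pp U) R \<times>\<times> G_quot s sig eps Lam q W)"
    then obtain g h where y: "y = (g, h)" "okg g" "okh h" using tc by (metis surj_pair)
    show "res_ind sig eps q W (?t y) = y" unfolding y(1) res_ind_def using F_restrict[OF y(2,3)] F_quot[OF y(2,3)] by simp
  qed
  ultimately show "\<exists>t\<in>hom (AT_id s W (W \<inter> pp U) R \<times>\<times> G_quot s sig eps Lam q W) (AEU_stab s sig eps Lam q U W).
     \<forall>y\<in>carrier (AT_id s W (W \<inter> pp U) R \<times>\<times> G_quot s sig eps Lam q W). res_ind sig eps q W (t y) = y" by blast
qed

end

lemma (in wctx) dec_exists: "\<exists>C Y. dec s sig eps Lam q W U1 C Y"
proof -
  obtain C Y where CY: "subspace C \<and> C \<subseteq> Wp \<and> C \<inter> W = {0} \<and> (\<forall>v\<in>Wp. \<exists>a\<in>W. \<exists>c\<in>C. v = a + c) \<and>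
     subspace Y \<and> (\<forall>y\<in>Y. \<forall>z\<in>Y. om y z = 0) \<and> (\<forall>y\<in>Y. q y y \<in> Lam) \<and> Y \<inter> Wp = {0} \<and>
     (\<forall>v. \<exists>d\<in>Wp. \<exists>y\<in>Y. v = d + y) \<and> U1 \<subseteq> Y \<and> (\<forall>c\<in>C. \<forall>y\<in>Y. om y c = 0) \<and>
     (\<forall>\<psi>. klin_on W \<psi> \<and> (\<forall>r\<in>R. \<psi> r = 0) \<longrightarrow> (\<exists>y\<in>Y. \<forall>w\<in>W. om y w = \<psi> w))"
    using decomp_exists by (elim exE) (erule that)
  have c1: "subspace C" by (rule CY[THEN conjunct1])
  have c2: "C \<subseteq> Wp" by (rule CY[THEN conjunct2, THEN conjunct1])
  have c3: "C \<inter> W = {0}" by (rule CY[THEN conjunct2, THEN conjunct2, THEN conjunct1])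
  have c4: "\<forall>v\<in>Wp. \<exists>a\<in>W. \<exists>c\<in>C. v = a + c" by (rule CY[THEN conjunct2, THEN conjunct2, THEN conjunct2, THEN conjunct1])
  have y1: "subspace Y" by (rule CY[THEN conjunct2, THEN conjunct2, THEN conjunct2, THEN conjunct2, THEN conjunct1])
  have y2: "\<forall>y\<in>Y. \<forall>z\<in>Y. om y z = 0" by (rule CY[THEN conjunct2, THEN conjunct2, THEN conjunct2, THEN conjunct2, THEN conjunct2, THEN conjunct1])
  have y3: "\<forall>y\<in>Y. q y y \<in> Lam" by (rule CY[THEN conjunct2, THEN conjunct2, THEN conjunct2, THEN conjunct2, THEN conjunct2, THEN conjunct2, THEN conjunct1])
  have y4: "Y \<inter> Wp = {0}" by (rule CY[THEN conjunct2, THEN conjunct2, THEN conjunct2, THEN conjunct2, THEN conjunct2, THEN conjunct2, THEN conjunct2, THEN conjunct1])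
  have y5: "\<forall>v. \<exists>d\<in>Wp. \<exists>y\<in>Y. v = d + y" by (rule CY[THEN conjunct2, THEN conjunct2, THEN conjunct2, THEN conjunct2, THEN conjunct2, THEN conjunct2, THEN conjunct2, THEN conjunct2, THEN conjunct1])
  have y6: "U1 \<subseteq> Y" by (rule CY[THEN conjunct2, THEN conjunct2, THEN conjunct2, THEN conjunct2, THEN conjunct2, THEN conjunct2, THEN conjunct2, THEN conjunct2, THEN conjunct2, THEN conjunct1])
  have cy: "\<forall>c\<in>C. \<forall>y\<in>Y. om y c = 0" by (rule CY[THEN conjunct2, THEN conjunct2, THEN conjunct2, THEN conjunct2, THEN conjunct2, THEN conjunct2, THEN conjunct2, THEN conjunct2, THEN conjunct2, THEN conjunct2, THEN conjunct1])
  have rp: "\<forall>\<psi>. klin_on W \<psi> \<and> (\<forall>r\<in>R. \<psi> r = 0) \<longrightarrow> (\<exists>y\<in>Y. \<forall>w\<in>W. om y w = \<psi> w)" by (rule CY[THEN conjunct2, THEN conjunct2, THEN conjunct2, THEN conjunct2, THEN conjunct2, THEN conjunct2, THEN conjunct2, THEN conjunct2, THEN conjunct2, THEN conjunct2, THEN conjunct2])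
  have "dec_axioms s sig eps Lam q W U1 C Y"
  proof (rule dec_axioms.intro)
    show "subspace C" "C \<subseteq> Wp" "C \<inter> W = {0}" "subspace Y" "Y \<inter> Wp = {0}" "U1 \<subseteq> Y"
      by (fact c1 c2 c3 y1 y4 y6)+
    show "\<And>v. v \<in> Wp \<Longrightarrow> \<exists>a\<in>W. \<exists>c\<in>C. v = a + c" using c4 by blast
    show "\<And>y z. y \<in> Y \<Longrightarrow> z \<in> Y \<Longrightarrow> om y z = 0" using y2 by blast
    show "\<And>y. y \<in> Y \<Longrightarrow> q y y \<in> Lam" using y3 by blast
    show "\<And>v. \<exists>d\<in>Wp. \<exists>y\<in>Y. v = d + y" using y5 by blast
    show "\<And>c y. c \<in> C \<Longrightarrow> y \<in> Y \<Longrightarrow> om y c = 0" using cy by blast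
    show "\<And>\<psi>. klin_on W \<psi> \<Longrightarrow> (\<And>r. r \<in> R \<Longrightarrow> \<psi> r = 0) \<Longrightarrow> \<exists>y\<in>Y. \<forall>w\<in>W. om y w = \<psi> w"
      using rp by blast
  qed
  hence "dec s sig eps Lam q W U1 C Y" by (intro dec.intro wctx.intro fsp_axioms wctx_axioms)
  thus ?thesis by blast
qed

theorem proposition5p5:
  fixes s :: "'k::field \<Rightarrow> 'v::ab_group_add \<Rightarrow> 'v"
    and sig :: "'k \<Rightarrow> 'k" and eps :: 'k and Lam :: "'k set"
    and q :: "'v \<Rightarrow> 'v \<Rightarrow> 'k"
  assumes "formed_space s sig eps Lam q"
  shows "(\<forall>W \<in> Pomega s sig eps Lam q.
            split_surjective (GE_stab s sig eps Lam q W)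
              (GL_pres s W (radical sig eps Lam q) \<times>\<times> G_quot s sig eps Lam q W)
              (res_ind sig eps q W))
       \<and> (\<forall>U \<in> Pomega s sig eps Lam q. \<forall>W \<in> PomegaU s sig eps Lam q U.
            split_surjective (AEU_stab s sig eps Lam q U W)
              (AT_id s W (W \<inter> perp sig eps q U) (radical sig eps Lam q) \<times>\<times> G_quot s sig eps Lam q W)
              (res_ind sig eps q W))"
proof -
  interpret fsp s sig eps Lam q using assms by (rule fsp.intro)
  have iso0: "isotropic s sig eps Lam q {0}" unfolding isotropic_def using Lam0 by simp
  have z0: "{0} \<inter> perp sig eps q W = {0}" for W using subspace_0[OF perp_sub] by auto
  have wc0: "wctx s sig eps Lam q W {0}" if "W \<in> Pomega s sig eps Lam q" for W
    by (intro wctx.intro fsp_axioms wctx_axioms.intro that iso0 z0)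
  have P1: "\<forall>W \<in> Pomega s sig eps Lam q.
            split_surjective (GE_stab s sig eps Lam q W)
              (GL_pres s W (radical sig eps Lam q) \<times>\<times> G_quot s sig eps Lam q W)
              (res_ind sig eps q W)"
  proof
    fix W assume W: "W \<in> Pomega s sig eps Lam q"
    interpret w: wctx s sig eps Lam q W "{0}" by (rule wc0[OF W])
    obtain C Y where "dec s sig eps Lam q W {0} C Y" using w.dec_exists by blast
    then interpret d: dec s sig eps Lam q W "{0}" C Y .
    show "split_surjective (GE_stab s sig eps Lam q W)
              (GL_pres s W (radical sig eps Lam q) \<times>\<times> G_quot s sig eps Lam q W)
              (res_ind sig eps q W)" by (rule d.part1)
  qed
  have P2: "\<forall>U \<in> Pomega s sig eps Lam q. \<forall>W \<in> PomegaU s sig eps Lam q U.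
            split_surjective (AEU_stab s sig eps Lam q U W)
              (AT_id s W (W \<inter> perp sig eps q U) (radical sig eps Lam q) \<times>\<times> G_quot s sig eps Lam q W)
              (res_ind sig eps q W)"
  proof (intro ballI)
    fix U W assume U: "U \<in> Pomega s sig eps Lam q" and WU: "W \<in> PomegaU s sig eps Lam q U"
    have W: "W \<in> Pomega s sig eps Lam q" and sp: "\<forall>x. \<exists>w\<in>W. \<exists>u\<in>pp U. x = w + u"
      using WU unfolding PomegaU_def by auto
    have subU: "subspace U" and isoU: "\<And>v w. v \<in> U \<Longrightarrow> w \<in> U \<Longrightarrow> om v w = 0"
      and QU: "\<And>v. v \<in> U \<Longrightarrow> q v v \<in> Lam" and RU: "R \<subseteq> U"
      using U unfolding Pomega_def isotropic_def by auto
    interpret w0: wctx s sig eps Lam q W "{0}" by (rule wc0[OF W])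
    obtain U1 where U1: "subspace U1" "U1 \<subseteq> U" "U1 \<inter> R = {0}" "\<forall>v\<in>U. \<exists>a\<in>R. \<exists>c\<in>U1. v = a + c"
      using gc_rel[OF w0.subR subU] by blast
    have isoU1: "isotropic s sig eps Lam q U1" unfolding isotropic_def using U1 isoU QU by blast
    have "U1 \<inter> pp W = {0}"
    proof -
      have "u = 0" if u: "u \<in> U1" "u \<in> pp W" for u
      proof -
        have "om x u = 0" for x
        proof -
          obtain w z where wz: "w \<in> W" "z \<in> pp U" "x = w + z" using sp by blast
          have "om u w = 0" using u(2) wz(1) unfolding perp_def by blast
          hence "om w u = 0" using om_zero_sym by blast
          moreover have "om z u = 0" using wz(2) u(1) U1(2) unfolding perp_def by blast
          ultimately show ?thesis using wz(3) by (simp add: om_addl)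
        qed
        hence "u \<in> R" using QU u U1(2) by (intro radI) auto
        thus "u = 0" using U1(3) u by blast
      qed
      thus ?thesis using subspace_0[OF U1(1)] subspace_0[OF perp_sub] by blast
    qed
    then interpret w: wctx s sig eps Lam q W U1 by (intro wctx.intro fsp_axioms wctx_axioms.intro W isoU1)
    obtain C Y where "dec s sig eps Lam q W U1 C Y" using w.dec_exists by blast
    then interpret d: dec s sig eps Lam q W U1 C Y .
    show "split_surjective (AEU_stab s sig eps Lam q U W)
              (AT_id s W (W \<inter> perp sig eps q U) (radical sig eps Lam q) \<times>\<times> G_quot s sig eps Lam q W)
              (res_ind sig eps q W)" using d.part2[OF RU _ U1(2)] U1(4) by blast
  qed
  show ?thesis using P1 P2 by blast
qed

end
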